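(* Let $\mathbf F\in\mathcal F_d$, $C\in\mathcal C^{OS}(\mathbf F)$ and let $U$ be a random vector with cdf $S_{\mathbf F}(C)$, with order statistics $U^{OS}=(U_{(1)},\dots,U_{(d)})$. Then the multidiagonal $(\delta_{(1)},\dots,\delta_{(d)})$ of $S_{\mathbf F}(C)$ does not depend on $C$ and is given, for $1\le i\le d$, by $$\delta_{(i)}=\mathbf F_i\circ G^{-1},\qquad \delta_{(i)}^{-1}=G\circ\mathbf F_i^{-1}.$$ Furthermore, $C$ is the unique copula of $U^{OS}$.
   Context: $\mathcal F_d$: $d$-tuples $\mathbf F=(\mathbf F_1,\dots,\mathbf F_d)$ of continuous cdf's on $\mathbb R$ with $\mathbf F_{i-1}\ge\mathbf F_i$. For a bounded nondecreasing right-continuous $J$ on $\mathbb R$, $J^{-1}(t)=\inf\{s\in\mathbb R:J(s)\ge t\}$ (with $\inf\emptyset=+\infty$, $\inf\mathbb R=-\infty$). $\mathcal L^{OS}_d(\mathbf F)$: cdf's of random vectors $X$ with $X_1\le\dots\le X_d$ a.s. and $X_i\sim\mathbf F_i$. A copula is a cdf on $\mathbb R^d$ with uniform-on-$[0,1]$ marginals; $C_F(y)=F(F_1^{-1}(y_1),\dots,F_d^{-1}(y_d))$; $\mathcal C^{OS}(\mathbf F)=\{C_F:F\in\mathcal L^{OS}_d(\mathbf F)\}$. $G=\frac1d\sum_{i=1}^d\mathbf F_i$. $S_{\mathbf F}(C)$ is the copula of $X_\Pi=(X_{\Pi(1)},\dots,X_{\Pi(d)})$ where $X$ has marginals $\mathbf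 F$ and copula $C$ and $\Pi$ is an independent uniform random permutation. The multidiagonal of a copula $C'$ is the vector of cdf's of the order statistics of a random vector with cdf $C'$. *)

theory Defs
  imports "HOL-Probability.Probability" "HOL-Combinatorics.Permutations"
begin

text \<open>Indices are 0-based: coordinate i < d corresponds to the paper's index i+1.
  Vectors in R^d are functions nat => real, only coordinates below d matter.\<close>

definition is_cdf1 :: "(real \<Rightarrow> real) \<Rightarrow> bool" where
  "is_cdf1 J \<longleftrightarrow> mono J \<and> (J \<longlongrightarrow> 0) at_bot \<and> (J \<longlongrightarrow> 1) at_top
     \<and> (\<forall>x. continuous (at_right x) J)"

text \<open>Generalised inverse J^{-1}(t) = inf {s in R. J s >= t}, in the extended reals
  (inf of empty set = +infinity, inf of R = -infinity).\<close>
definition ginv :: "(real \<Rightarrow> real) \<Rightarrow> real \<Rightarrow> ereal" where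
  "ginv J t = Inf {ereal s | s. t \<le> J s}"

definition ecdf :: "(real \<Rightarrow> real) \<Rightarrow> ereal \<Rightarrow> real" where
  "ecdf J x = (if x = \<infinity> then 1 else if x = -\<infinity> then 0 else J (real_of_ereal x))"

definition in_Fd :: "nat \<Rightarrow> (nat \<Rightarrow> real \<Rightarrow> real) \<Rightarrow> bool" where
  "in_Fd d F \<longleftrightarrow> (\<forall>i<d. is_cdf1 (F i) \<and> continuous_on UNIV (F i))
     \<and> (\<forall>i. Suc i < d \<longrightarrow> (\<forall>t. F (Suc i) t \<le> F i t))"

definition Gmix :: "nat \<Rightarrow> (nat \<Rightarrow> real \<Rightarrow> real) \<Rightarrow> real \<Rightarrow> real" where
  "Gmix d F t = (\<Sum>i<d. F i t) / real d"

definition rand_vec :: "'a measure \<Rightarrow> nat \<Rightarrow> ('a \<Rightarrow> nat \<Rightarrow> real) \<Rightarrow> bool" where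
  "rand_vec M d X \<longleftrightarrow> (\<forall>i<d. (\<lambda>\<omega>. X \<omega> i) \<in> borel_measurable M)"

definition vcdf :: "'a measure \<Rightarrow> nat \<Rightarrow> ('a \<Rightarrow> nat \<Rightarrow> real) \<Rightarrow> (nat \<Rightarrow> ereal) \<Rightarrow> real" where
  "vcdf M d X x = measure M {\<omega> \<in> space M. \<forall>i<d. ereal (X \<omega> i) \<le> x i}"

definition has_cdf :: "'a measure \<Rightarrow> nat \<Rightarrow> ('a \<Rightarrow> nat \<Rightarrow> real) \<Rightarrow> ((nat \<Rightarrow> real) \<Rightarrow> real) \<Rightarrow> bool" where
  "has_cdf M d X H \<longleftrightarrow> (\<forall>x. H x = measure M {\<omega> \<in> space M. \<forall>i<d. X \<omega> i \<le> x i})"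

definition marg :: "'a measure \<Rightarrow> ('a \<Rightarrow> nat \<Rightarrow> real) \<Rightarrow> nat \<Rightarrow> real \<Rightarrow> real" where
  "marg M X i t = measure M {\<omega> \<in> space M. X \<omega> i \<le> t}"

definition is_dcdf :: "nat \<Rightarrow> ((nat \<Rightarrow> real) \<Rightarrow> real) \<Rightarrow> bool" where
  "is_dcdf d H \<longleftrightarrow> (\<exists>N. prob_space N \<and> sets N = sets (PiM {..<d} (\<lambda>_. borel))
      \<and> (\<forall>x. H x = measure N {y \<in> space N. \<forall>i<d. y i \<le> x i}))"

definition is_copula :: "nat \<Rightarrow> ((nat \<Rightarrow> real) \<Rightarrow> real) \<Rightarrow> bool" where
  "is_copula d C \<longleftrightarrow> (\<exists>N. prob_space N \<and> sets N = sets (PiM {..<d} (\<lambda>_. borel))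
      \<and> (\<forall>x. C x = measure N {y \<in> space N. \<forall>i<d. y i \<le> x i})
      \<and> (\<forall>i<d. \<forall>t. measure N {y \<in> space N. y i \<le> t} = min 1 (max 0 t)))"

definition copula_of :: "'a measure \<Rightarrow> nat \<Rightarrow> ('a \<Rightarrow> nat \<Rightarrow> real) \<Rightarrow> ((nat \<Rightarrow> real) \<Rightarrow> real) \<Rightarrow> bool" where
  "copula_of M d X C \<longleftrightarrow> is_copula d C
     \<and> (\<forall>y. C y = vcdf M d X (\<lambda>i. ginv (marg M X i) (y i)))"

definition in_COS :: "nat \<Rightarrow> (nat \<Rightarrow> real \<Rightarrow> real) \<Rightarrow> ((nat \<Rightarrow> real) \<Rightarrow> real) \<Rightarrow> bool" where
  "in_COS d F C \<longleftrightarrow> (\<exists>(M :: (nat \<Rightarrow> real) measure) X. prob_space M \<and> rand_vec M d X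
      \<and> (AE \<omega> in M. \<forall>i. Suc i < d \<longrightarrow> X \<omega> i \<le> X \<omega> (Suc i))
      \<and> (\<forall>i<d. marg M X i = F i)
      \<and> copula_of M d X C)"

definition ordstat :: "nat \<Rightarrow> (nat \<Rightarrow> real) \<Rightarrow> nat \<Rightarrow> real" where
  "ordstat d x i = sort (map x [0..<d]) ! i"

end

theory Submission
  imports Defs
begin


definition orth :: "nat set \<Rightarrow> (nat \<Rightarrow> real) \<Rightarrow> (nat \<Rightarrow> real) set" where
  "orth I a = {f \<in> PiE I (\<lambda>_. UNIV). \<forall>i\<in>I. f i \<le> a i}"

lemma sets_PiM_atMost:
  fixes I :: "nat set"
  assumes "finite I"
  shows "sets (PiM I (\<lambda>_. borel :: real measure)) = sigma_sets (PiE I (\<lambda>_. UNIV)) (range (orth I))"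
proof -
  let ?P = "{{f \<in> PiE I (\<lambda>_. UNIV). \<forall>i\<in>j. f i \<in> A i} |A j. j \<in> {I} \<and> A \<in> Pi j (\<lambda>_. range (atMost::real\<Rightarrow>real set))}"
  have Pchar: "?P = range (orth I)"
  proof (intro set_eqI iffI)
    fix X assume "X \<in> ?P"
    then obtain A where A: "A \<in> Pi I (\<lambda>_. range atMost)" and X: "X = {f \<in> PiE I (\<lambda>_. UNIV). \<forall>i\<in>I. f i \<in> A i}"
      by blast
    from A have "\<forall>i\<in>I. \<exists>a. A i = {..a}" by blast
    then obtain a where "\<forall>i\<in>I. A i = {..a i}" by metis
    with X have "X = orth I a" by (auto simp: orth_def)
    then show "X \<in> range (orth I)" by blast
  next
    fix X assume "X \<in> range (orth I)"
    then obtain a where X: "X = orth I a" by blast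
    have "X = {f \<in> PiE I (\<lambda>_. UNIV). \<forall>i\<in>I. f i \<in> (\<lambda>i. {..a i}) i}" by (auto simp: X orth_def)
    moreover have "(\<lambda>i. {..a i}) \<in> Pi I (\<lambda>_. range (atMost::real\<Rightarrow>real set))" by auto
    ultimately show "X \<in> ?P"
      apply -
      apply (rule CollectI)
      apply (rule exI[of _ "\<lambda>i. {..a i}"])
      apply (rule exI[of _ I])
      apply (intro conjI)
        apply assumption
       apply simp
      apply assumption
      done
  qed
  have "sets (PiM I (\<lambda>_. borel :: real measure)) = sets (PiM I (\<lambda>i. sigma UNIV (range atMost)))"
    by (simp add: borel_eq_atMost)
  also have "\<dots> = sets (sigma (PiE I (\<lambda>_. UNIV)) ?P)"
  proof (rule sets_PiM_sigma)
    fix i show "\<exists>S\<subseteq>range atMost. countable S \<and> (UNIV::real set) = \<Union> S"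
      by (intro exI[of _ "range (\<lambda>n::nat. {..real n})"])
         (auto intro: real_arch_simple)
  qed (use assms in auto)
  also have "\<dots> = sigma_sets (PiE I (\<lambda>_. UNIV)) ?P"
    by (rule sets_measure_of) auto
  finally show ?thesis unfolding Pchar .
qed

lemma law_eq:
  fixes W1 :: "'a \<Rightarrow> nat \<Rightarrow> real" and W2 :: "'b \<Rightarrow> nat \<Rightarrow> real"
  assumes P1: "prob_space M1" and P2: "prob_space M2"
    and m1: "\<forall>i<d. (\<lambda>\<omega>. W1 \<omega> i) \<in> borel_measurable M1"
    and m2: "\<forall>i<d. (\<lambda>\<omega>. W2 \<omega> i) \<in> borel_measurable M2"
    and eq: "\<And>x. measure M1 {\<omega>\<in>space M1. \<forall>i<d. W1 \<omega> i \<le> x i} = measure M2 {\<omega>\<in>space M2. \<forall>i<d. W2 \<omega> i \<le> x i}"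
  shows "distr M1 (PiM {..<d} (\<lambda>_. borel)) (\<lambda>\<omega>. restrict (W1 \<omega>) {..<d})
       = distr M2 (PiM {..<d} (\<lambda>_. borel)) (\<lambda>\<omega>. restrict (W2 \<omega>) {..<d})"
proof -
  let ?I = "{..<d}"
  have meas1: "(\<lambda>\<omega>. restrict (W1 \<omega>) ?I) \<in> measurable M1 (PiM ?I (\<lambda>_. borel))"
    using m1 by (intro measurable_restrict) auto
  have meas2: "(\<lambda>\<omega>. restrict (W2 \<omega>) ?I) \<in> measurable M2 (PiM ?I (\<lambda>_. borel))"
    using m2 by (intro measurable_restrict) auto
  interpret p1: prob_space M1 by (rule P1)
  interpret p2: prob_space M2 by (rule P2)
  show ?thesis
  proof (rule measure_eqI_generator_eq[where E="range (orth ?I)" and \<Omega>="PiE ?I (\<lambda>_. UNIV)"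
        and A="\<lambda>n. orth ?I (\<lambda>_. real n)"])
    show "Int_stable (range (orth ?I))"
    proof (rule Int_stableI)
      fix a b assume "a \<in> range (orth ?I)" "b \<in> range (orth ?I)"
      then obtain x y where "a = orth ?I x" "b = orth ?I y" by blast
      then have "a \<inter> b = orth ?I (\<lambda>i. min (x i) (y i))" by (auto simp: orth_def)
      then show "a \<inter> b \<in> range (orth ?I)" by blast
    qed
    show "range (orth ?I) \<subseteq> Pow (PiE ?I (\<lambda>_. UNIV))" by (auto simp: orth_def)
    fix X assume "X \<in> range (orth ?I)"
    then obtain a where X: "X = orth ?I a" by blast
    have sX: "X \<in> sets (PiM ?I (\<lambda>_. borel))"
      unfolding sets_PiM_atMost[OF finite_lessThan] X by blast
    have e1: "(\<lambda>\<omega>. restrict (W1 \<omega>) ?I) -` X \<inter> space M1 = {\<omega>\<in>space M1. \<forall>i<d. W1 \<omega> i \<le> a i}"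
      by (auto simp: X orth_def)
    have e2: "(\<lambda>\<omega>. restrict (W2 \<omega>) ?I) -` X \<inter> space M2 = {\<omega>\<in>space M2. \<forall>i<d. W2 \<omega> i \<le> a i}"
      by (auto simp: X orth_def)
    show "emeasure (distr M1 (PiM ?I (\<lambda>_. borel)) (\<lambda>\<omega>. restrict (W1 \<omega>) ?I)) X
        = emeasure (distr M2 (PiM ?I (\<lambda>_. borel)) (\<lambda>\<omega>. restrict (W2 \<omega>) ?I)) X"
      using eq[of a] sX meas1 meas2
      by (simp add: emeasure_distr e1 e2 p1.emeasure_eq_measure p2.emeasure_eq_measure)
  next
    show "sets (distr M1 (PiM ?I (\<lambda>_. borel)) (\<lambda>\<omega>. restrict (W1 \<omega>) ?I)) = sigma_sets (PiE ?I (\<lambda>_. UNIV)) (range (orth ?I))"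
      by (simp add: sets_PiM_atMost)
    show "sets (distr M2 (PiM ?I (\<lambda>_. borel)) (\<lambda>\<omega>. restrict (W2 \<omega>) ?I)) = sigma_sets (PiE ?I (\<lambda>_. UNIV)) (range (orth ?I))"
      by (simp add: sets_PiM_atMost)
    show "range (\<lambda>n. orth ?I (\<lambda>_. real n)) \<subseteq> range (orth ?I)" by blast
    show "(\<Union>n. orth ?I (\<lambda>_. real n)) = PiE ?I (\<lambda>_. UNIV)"
    proof (intro set_eqI iffI)
      fix f :: "nat \<Rightarrow> real" assume f: "f \<in> PiE ?I (\<lambda>_. UNIV)"
      obtain n :: nat where n: "Max (insert 0 (f ` ?I)) \<le> real n" using real_arch_simple by blast
      have "\<forall>i\<in>?I. f i \<le> real n"
      proof
        fix i assume "i \<in> ?I"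
        then have "f i \<le> Max (insert 0 (f ` ?I))" by (intro Max_ge) auto
        with n show "f i \<le> real n" by linarith
      qed
      with f have "f \<in> orth ?I (\<lambda>_. real n)" by (simp add: orth_def)
      then show "f \<in> (\<Union>n. orth ?I (\<lambda>_. real n))" by blast
    next
      fix f assume "f \<in> (\<Union>n. orth ?I (\<lambda>_. real n))"
      then show "f \<in> PiE ?I (\<lambda>_. UNIV)" by (auto simp: orth_def)
    qed
    fix n :: nat
    show "emeasure (distr M1 (PiM ?I (\<lambda>_. borel)) (\<lambda>\<omega>. restrict (W1 \<omega>) ?I)) (orth ?I (\<lambda>_. real n)) \<noteq> \<infinity>"
    proof -
      interpret pd: prob_space "distr M1 (PiM ?I (\<lambda>_. borel)) (\<lambda>\<omega>. restrict (W1 \<omega>) ?I)"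
        by (rule p1.prob_space_distr[OF meas1])
      show ?thesis by simp
    qed
  qed
qed



definition ccdf :: "(real \<Rightarrow> real) \<Rightarrow> bool" where
  "ccdf H \<longleftrightarrow> mono H \<and> (H \<longlongrightarrow> 0) at_bot \<and> (H \<longlongrightarrow> 1) at_top \<and> continuous_on UNIV H"

lemma ccdf_bounds:
  assumes "ccdf H" shows "0 \<le> H x" "H x \<le> 1"
proof -
  have m: "mono H" and l0: "(H \<longlongrightarrow> 0) at_bot" and l1: "(H \<longlongrightarrow> 1) at_top"
    using assms by (auto simp: ccdf_def)
  have "\<forall>\<^sub>F y in at_bot. H y \<le> H x"
    using eventually_le_at_bot[of x] by eventually_elim (use m in \<open>auto dest: monoD\<close>)
  from tendsto_upperbound[OF l0 this] show "0 \<le> H x" by simp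
  have "\<forall>\<^sub>F y in at_top. H x \<le> H y"
    using eventually_ge_at_top[of x] by eventually_elim (use m in \<open>auto dest: monoD\<close>)
  from tendsto_lowerbound[OF l1 this] show "H x \<le> 1" by simp
qed

lemma ginv_le_iff:
  assumes "mono H" "continuous_on UNIV H"
  shows "ginv H t \<le> ereal s \<longleftrightarrow> t \<le> H s"
proof
  assume "t \<le> H s" then show "ginv H t \<le> ereal s"
    unfolding ginv_def by (intro Inf_lower) auto
next
  assume le: "ginv H t \<le> ereal s"
  show "t \<le> H s"
  proof (rule ccontr)
    assume "\<not> t \<le> H s"
    then have lt: "H s < t" by simp
    have "isCont H s" using assms(2) by (simp add: continuous_on_eq_continuous_at)
    then obtain e where e: "e > 0" "\<And>y. dist y s < e \<Longrightarrow> dist (H y) (H s) < t - H s"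
      using lt unfolding continuous_at_eps_delta by (metis diff_gt_0_iff_gt)
    have "ginv H t \<ge> ereal (s + e/2)"
      unfolding ginv_def
    proof (rule Inf_greatest)
      fix x assume "x \<in> {ereal s |s. t \<le> H s}"
      then obtain r where x: "x = ereal r" and r: "t \<le> H r" by blast
      have "s + e/2 \<le> r"
      proof (rule ccontr)
        assume "\<not> s + e/2 \<le> r"
        then have "r < s + e/2" by simp
        show False
        proof (cases "r \<le> s")
          case True then have "H r \<le> H s" using assms(1) by (auto dest: monoD)
          with r lt show False by simp
        next
          case False
          then have "dist r s < e" using \<open>r < s + e/2\<close> e(1) by (simp add: dist_real_def)
          then have "H r - H s < t - H s" using e(2)[of r] by (simp add: dist_real_def)
          with r show False by simp
        qed
      qed
      then show "ereal (s + e/2) \<le> x" by (simp add: x)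
    qed
    with le have "ereal (s + e/2) \<le> ereal s" by (rule order_trans[rotated])
    with e(1) show False by simp
  qed
qed

lemma le_ginv_iff:
  assumes "mono H"
  shows "ereal x \<le> ginv H t \<longleftrightarrow> (\<forall>s<x. H s < t)"
proof
  assume "ereal x \<le> ginv H t"
  then have h: "\<forall>s. t \<le> H s \<longrightarrow> x \<le> s" unfolding ginv_def le_Inf_iff by auto
  show "\<forall>s<x. H s < t"
  proof (intro allI impI)
    fix s assume "s < x"
    show "H s < t"
    proof (rule ccontr)
      assume "\<not> H s < t" then have "t \<le> H s" by simp
      with h have "x \<le> s" by blast
      with \<open>s < x\<close> show False by simp
    qed
  qed
next
  assume h: "\<forall>s<x. H s < t"
  show "ereal x \<le> ginv H t"
    unfolding ginv_def le_Inf_iff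
  proof safe
    fix s assume "t \<le> H s"
    have "x \<le> s"
    proof (rule ccontr)
      assume "\<not> x \<le> s" then have "s < x" by simp
      with h have "H s < t" by blast
      with \<open>t \<le> H s\<close> show False by simp
    qed
    then show "ereal x \<le> ereal s" by simp
  qed
qed

lemma le_ginv_imp:
  assumes "mono H" "continuous_on UNIV H" "ereal x \<le> ginv H t"
  shows "H x \<le> t"
proof -
  have h: "\<forall>s<x. H s < t" using le_ginv_iff[OF assms(1)] assms(3) by blast
  have "(H \<longlongrightarrow> H x) (at_left x)"
    using assms(2) by (simp add: continuous_on_eq_continuous_at filterlim_at_split isCont_def)
  moreover have "\<forall>\<^sub>F s in at_left x. H s \<le> t"
    using h by (auto simp: eventually_at_left_field intro!: exI[of _ "x - 1"] less_imp_le)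
  ultimately show ?thesis
    by (rule tendsto_upperbound) simp
qed

lemma ginv_neg:
  assumes "\<forall>s. t \<le> H s" shows "ginv H t = -\<infinity>"
proof -
  have "{ereal s |s. t \<le> H s} = range ereal" using assms by blast
  then show ?thesis unfolding ginv_def
    by (intro ereal_bot) (auto intro: Inf_lower)
qed

lemma ginv_big:
  assumes "\<forall>s. H s < t" shows "ginv H t = \<infinity>"
proof -
  have "{ereal s |s. t \<le> H s} = {}" using assms by (auto simp: not_le)
  then show ?thesis unfolding ginv_def by (simp add: top_ereal_def)
qed

lemma ccdf_ginv_mid:
  assumes "ccdf H" "0 < t" "t < 1"
  shows "\<exists>q. ginv H t = ereal q \<and> H q = t"
proof -
  have m: "mono H" and c: "continuous_on UNIV H" and l0: "(H \<longlongrightarrow> 0) at_bot" and l1: "(H \<longlongrightarrow> 1) at_top"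
    using assms by (auto simp: ccdf_def)
  have "\<forall>\<^sub>F s in at_top. H s > t" using l1 assms(3) by (rule order_tendstoD)
  then obtain s1 where s1: "H s1 > t" by (auto simp: eventually_at_top_linorder)
  have "\<forall>\<^sub>F s in at_bot. H s < t" using l0 assms(2) by (rule order_tendstoD)
  then obtain s0 where s0: "H s0 < t" by (auto simp: eventually_at_bot_linorder)
  have "ginv H t \<le> ereal s1" using ginv_le_iff[OF m c] s1 by simp
  moreover have "\<not> ginv H t \<le> ereal s0" using ginv_le_iff[OF m c] s0 by simp
  ultimately obtain q where q: "ginv H t = ereal q"
    by (cases "ginv H t") auto
  have "t \<le> H q" using ginv_le_iff[OF m c, of t q] q by simp
  moreover have "H q \<le> t" using le_ginv_imp[OF m c, of q t] q by simp
  ultimately show ?thesis using q by auto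
qed

lemma ccdf_ginv_le0:
  assumes "ccdf H" "t \<le> 0" shows "ginv H t = -\<infinity>"
  using ccdf_bounds[OF assms(1)] assms(2) by (intro ginv_neg) (auto intro: order_trans)

lemma ccdf_ginv_gt1:
  assumes "ccdf H" "1 < t" shows "ginv H t = \<infinity>"
  using ccdf_bounds[OF assms(1)] assms(2) by (intro ginv_big) (auto intro: le_less_trans)

lemma ccdf_ginv_1:
  assumes "ccdf H" shows "ginv H 1 = \<infinity> \<or> (\<exists>q. ginv H 1 = ereal q \<and> H q = 1)"
proof -
  have m: "mono H" and c: "continuous_on UNIV H" and l0: "(H \<longlongrightarrow> 0) at_bot"
    using assms by (auto simp: ccdf_def)
  have "\<forall>\<^sub>F s in at_bot. H s < 1" using l0 by (rule order_tendstoD) simp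
  then obtain s0 where s0: "H s0 < 1" by (auto simp: eventually_at_bot_linorder)
  have "\<not> ginv H 1 \<le> ereal s0" using ginv_le_iff[OF m c] s0 by simp
  then show ?thesis
  proof (cases "ginv H 1")
    case (real q)
    then have "1 \<le> H q" using ginv_le_iff[OF m c, of 1 q] by simp
    with ccdf_bounds[OF assms, of q] real show ?thesis by auto
  qed auto
qed

lemma ginv_mono:
  assumes "t \<le> t'" shows "ginv H t \<le> ginv H t'"
  unfolding ginv_def using assms by (intro Inf_superset_mono) auto

lemma ecdf_mono:
  assumes "mono H" "\<And>x. 0 \<le> H x" "\<And>x. H x \<le> 1" "a \<le> b"
  shows "ecdf H a \<le> ecdf H b"
  using assms
  by (cases a; cases b) (auto simp: ecdf_def dest: monoD)



lemma ccdf_Q: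
  assumes M: "prob_space M" and Z: "Z \<in> borel_measurable M"
    and cdf: "\<And>s. measure M {\<omega>\<in>space M. Z \<omega> \<le> s} = H s" and H: "ccdf H"
  shows "measure M {\<omega>\<in>space M. ereal (Z \<omega>) \<le> ginv H t} = min 1 (max 0 t)"
proof -
  interpret prob_space M by (rule M)
  consider "t \<le> 0" | "0 < t" "t < 1" | "t = 1" | "1 < t" by linarith
  then show ?thesis
  proof cases
    case 1 then show ?thesis using ccdf_ginv_le0[OF H 1] by simp
  next
    case 2
    then obtain q where q: "ginv H t = ereal q" "H q = t" using ccdf_ginv_mid[OF H] by blast
    then show ?thesis using cdf[of q] 2 by simp
  next
    case 3
    then show ?thesis
    proof (cases "ginv H 1 = \<infinity>")
      case True with 3 show ?thesis by (simp add: prob_space)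
    next
      case False
      then obtain q where q: "ginv H 1 = ereal q" "H q = 1" using ccdf_ginv_1[OF H] by blast
      then show ?thesis using cdf[of q] 3 by simp
    qed
  next
    case 4 then show ?thesis using ccdf_ginv_gt1[OF H 4] by (simp add: prob_space)
  qed
qed

lemma ccdf_PIT_le:
  assumes M: "prob_space M" and Z: "Z \<in> borel_measurable M"
    and cdf: "\<And>s. measure M {\<omega>\<in>space M. Z \<omega> \<le> s} = H s" and H: "ccdf H"
    and c: "0 \<le> c"
  shows "measure M {\<omega>\<in>space M. H (Z \<omega>) \<le> c} \<le> c"
proof (cases "c < 1")
  case False
  interpret prob_space M by (rule M)
  have "measure M {\<omega>\<in>space M. H (Z \<omega>) \<le> c} \<le> 1" by simp
  with False show ?thesis by linarith
next
  case True
  interpret prob_space M by (rule M)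
  have mH: "H \<in> borel_measurable borel"
    using H by (intro borel_measurable_continuous_onI) (simp add: ccdf_def)
  show ?thesis
  proof (rule dense_ge_bounded[OF True])
    fix w assume w: "c < w" "w < 1"
    have w0: "0 < w" using w c by linarith
    obtain q where q: "ginv H w = ereal q" "H q = w" using ccdf_ginv_mid[OF H w0 w(2)] by blast
    have "{\<omega>\<in>space M. H (Z \<omega>) \<le> c} \<subseteq> {\<omega>\<in>space M. Z \<omega> \<le> q}"
    proof (rule subsetI)
      fix \<omega> assume "\<omega> \<in> {\<omega>\<in>space M. H (Z \<omega>) \<le> c}"
      then have "\<omega> \<in> space M" "H (Z \<omega>) \<le> c" by auto
      have "Z \<omega> \<le> q"
      proof (rule ccontr)
        assume "\<not> Z \<omega> \<le> q"
        then have "q \<le> Z \<omega>" by simp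
        then have "H q \<le> H (Z \<omega>)" using H unfolding ccdf_def mono_def by blast
        with q w \<open>H (Z \<omega>) \<le> c\<close> show False by linarith
      qed
      with \<open>\<omega> \<in> space M\<close> show "\<omega> \<in> {\<omega>\<in>space M. Z \<omega> \<le> q}" by simp
    qed
    moreover have "{\<omega>\<in>space M. Z \<omega> \<le> q} \<in> sets M" using Z by measurable
    ultimately have "measure M {\<omega>\<in>space M. H (Z \<omega>) \<le> c} \<le> measure M {\<omega>\<in>space M. Z \<omega> \<le> q}"
      by (rule finite_measure_mono)
    with cdf[of q] q show "measure M {\<omega>\<in>space M. H (Z \<omega>) \<le> c} \<le> w" by simp
  qed
qed

lemma sandwich_AE:
  assumes M: "prob_space M"
    and sP: "{\<omega>\<in>space M. P \<omega>} \<in> sets M" and sQ: "{\<omega>\<in>space M. Q \<omega>} \<in> sets M"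
    and sR: "{\<omega>\<in>space M. R \<omega>} \<in> sets M"
    and PQ: "\<And>\<omega>. \<omega> \<in> space M \<Longrightarrow> P \<omega> \<Longrightarrow> Q \<omega>"
    and QR: "\<And>\<omega>. \<omega> \<in> space M \<Longrightarrow> Q \<omega> \<Longrightarrow> R \<omega>"
    and le: "measure M {\<omega>\<in>space M. R \<omega>} \<le> measure M {\<omega>\<in>space M. P \<omega>}"
  shows "AE \<omega> in M. P \<omega> \<longleftrightarrow> Q \<omega>"
proof -
  interpret prob_space M by (rule M)
  let ?P = "{\<omega>\<in>space M. P \<omega>}" and ?Q = "{\<omega>\<in>space M. Q \<omega>}" and ?R = "{\<omega>\<in>space M. R \<omega>}"
  let ?D = "?Q - ?P"
  have sub1: "?Q \<subseteq> ?R" using QR by blast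
  have sub2: "?P \<subseteq> ?Q" using PQ by blast
  have "measure M ?Q \<le> measure M ?R"
    using sub1 sR by (rule finite_measure_mono)
  moreover have "measure M ?D = measure M ?Q - measure M ?P"
    using sQ sP sub2 by (rule finite_measure_Diff)
  ultimately have "measure M ?D \<le> 0" using le by simp
  then have "measure M ?D = 0" using measure_nonneg[of M ?D] by simp
  moreover have "?D \<in> sets M" using sP sQ by (rule sets.Diff[rotated])
  ultimately have "?D \<in> null_sets M" by (intro null_setsI) (simp_all add: emeasure_eq_measure)
  then have "AE \<omega> in M. \<omega> \<notin> ?D" by (rule AE_not_in)
  with AE_space show ?thesis
  proof eventually_elim
    case (elim \<omega>)
    then show ?case using PQ[of \<omega>] by blast
  qed
qed

lemma AE_le_ginv_1:
  assumes M: "prob_space M" and W: "W \<in> borel_measurable M"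
    and cdf: "\<And>s. measure M {\<omega>\<in>space M. W \<omega> \<le> s} = \<delta> s"
  shows "AE \<omega> in M. ereal (W \<omega>) \<le> ginv \<delta> 1"
proof -
  interpret prob_space M by (rule M)
  have each: "AE \<omega> in M. W \<omega> \<le> r" if r: "ginv \<delta> 1 < ereal r" for r
  proof -
    from r obtain x where x: "x \<in> {ereal s |s. 1 \<le> \<delta> s}" "x < ereal r"
      unfolding ginv_def by (auto simp: Inf_less_iff)
    then obtain s where s: "x = ereal s" "1 \<le> \<delta> s" by blast
    have "measure M {\<omega>\<in>space M. W \<omega> \<le> s} = 1"
      using cdf[of s] s(2) prob_le_1[of "{\<omega>\<in>space M. W \<omega> \<le> s}"] by simp
    then have "AE \<omega> in M. W \<omega> \<le> s"
      using W by (subst prob_Collect_eq_1[symmetric]) (auto intro: measurable_sets_Collect)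
    then show ?thesis
      by eventually_elim (use x s in auto)
  qed
  have "AE \<omega> in M. \<forall>r\<in>\<rat>. ginv \<delta> 1 < ereal r \<longrightarrow> W \<omega> \<le> r"
    by (rule AE_ball_countable'[OF _ countable_rat]) (use each in auto)
  then show ?thesis
  proof eventually_elim
    case (elim \<omega>)
    show ?case
    proof (rule ccontr)
      assume "\<not> ereal (W \<omega>) \<le> ginv \<delta> 1"
      then have lt: "ginv \<delta> 1 < ereal (W \<omega>)" by simp
      obtain r where r: "r \<in> \<rat>" "ginv \<delta> 1 < ereal r" "r < W \<omega>"
      proof (cases "ginv \<delta> 1")
        case (real b)
        with lt have "b < W \<omega>" by simp
        from Rats_dense_in_real[OF this] obtain r where "r \<in> \<rat>" "b < r" "r < W \<omega>" by blast
        with real that show ?thesis by auto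
      next
        case MInf
        from Rats_dense_in_real[of "W \<omega> - 1" "W \<omega>"] obtain r where "r \<in> \<rat>" "r < W \<omega>" by auto
        with MInf that show ?thesis by auto
      next
        case PInf with lt show ?thesis by simp
      qed
      with elim show False by auto
    qed
  qed
qed



lemma mono_count:
  fixes w :: "nat \<Rightarrow> real"
  assumes mono: "\<And>k k'. k \<le> k' \<Longrightarrow> k' < d \<Longrightarrow> w k \<le> w k'"
    and D: "\<And>x y. y \<in> D \<Longrightarrow> x \<le> y \<Longrightarrow> x \<in> D" and i: "i < d"
  shows "w i \<in> D \<longleftrightarrow> real i < (\<Sum>k<d. of_bool (w k \<in> D))"
proof -
  let ?K = "{..<d} \<inter> {k. w k \<in> D}"
  have sum: "(\<Sum>k<d. of_bool (w k \<in> D)) = real (card ?K)"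
    by (rule sum_of_bool_eq) simp_all
  show ?thesis
  proof
    assume wi: "w i \<in> D"
    have "{..i} \<subseteq> ?K"
    proof
      fix k assume "k \<in> {..i}"
      then have "k \<le> i" by simp
      then have "w k \<le> w i" using mono i by blast
      then have "w k \<in> D" using D wi by blast
      with \<open>k \<le> i\<close> i show "k \<in> ?K" by simp
    qed
    then have "card {..i} \<le> card ?K" by (intro card_mono) auto
    then have "Suc i \<le> card ?K" by simp
    then show "real i < (\<Sum>k<d. of_bool (w k \<in> D))" unfolding sum by simp
  next
    assume lt: "real i < (\<Sum>k<d. of_bool (w k \<in> D))"
    show "w i \<in> D"
    proof (rule ccontr)
      assume wi: "w i \<notin> D"
      have "?K \<subseteq> {..<i}"
      proof
        fix k assume k: "k \<in> ?K"
        show "k \<in> {..<i}"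
        proof (rule ccontr)
          assume "k \<notin> {..<i}"
          then have "i \<le> k" by simp
          moreover have "k < d" using k by simp
          ultimately have "w i \<le> w k" using mono by blast
          moreover have "w k \<in> D" using k by simp
          ultimately have "w i \<in> D" using D by blast
          with wi show False by simp
        qed
      qed
      then have "card ?K \<le> card {..<i}" by (intro card_mono) auto
      then have "card ?K \<le> i" by simp
      with lt show False unfolding sum by simp
    qed
  qed
qed

lemma sum_sort_map:
  fixes f :: "real \<Rightarrow> real"
  shows "sum_list (map f (sort xs)) = sum_list (map f xs)"
proof -
  have "sum_list (map f (sort xs)) = sum_mset (mset (map f (sort xs)))" by (rule sum_mset_sum_list[symmetric])
  also have "\<dots> = sum_mset (image_mset f (mset xs))" by (simp only: mset_map mset_sort)
  also have "\<dots> = sum_list (map f xs)" by (simp only: mset_map[symmetric] sum_mset_sum_list)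
  finally show ?thesis .
qed

lemma ordstat_in:
  assumes D: "\<And>x y. y \<in> D \<Longrightarrow> x \<le> y \<Longrightarrow> x \<in> D" and i: "i < d"
  shows "ordstat d u i \<in> D \<longleftrightarrow> real i < (\<Sum>k<d. of_bool (u k \<in> D))"
proof -
  let ?ys = "sort (map u [0..<d])"
  have len: "length ?ys = d" by simp
  have "?ys ! i \<in> D \<longleftrightarrow> real i < (\<Sum>k<d. of_bool (?ys ! k \<in> D))"
  proof (rule mono_count[OF _ D i])
    fix k k' assume "k \<le> k'" "k' < d"
    then show "?ys ! k \<le> ?ys ! k'" by (intro sorted_nth_mono) simp_all
  qed
  moreover have "(\<Sum>k<d. of_bool (?ys ! k \<in> D)) = (\<Sum>k<d. of_bool (u k \<in> D) :: real)"
  proof -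
    let ?f = "\<lambda>x. of_bool (x \<in> D) :: real"
    have "(\<Sum>k<d. ?f (?ys ! k)) = sum_list (map ?f ?ys)"
      by (simp add: sum_list_sum_nth atLeast0LessThan)
    also have "\<dots> = sum_list (map ?f (map u [0..<d]))" by (rule sum_sort_map)
    also have "\<dots> = (\<Sum>k<d. ?f (u k))"
      by (simp add: sum_list_sum_nth atLeast0LessThan)
    finally show ?thesis .
  qed
  ultimately show ?thesis unfolding ordstat_def by simp
qed



lemma card_perm_fix:
  assumes j: "j < d"
  shows "card {p. p permutes {..<d} \<and> p j = j} = fact (d - 1)"
proof -
  have "{p. p permutes {..<d} \<and> p j = j} = {p. p permutes ({..<d} - {j})}"
  proof (intro set_eqI iffI)
    fix p assume "p \<in> {p. p permutes {..<d} \<and> p j = j}"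
    then have p: "p permutes {..<d}" "p j = j" by auto
    have "p permutes ({..<d} - {j})"
      by (rule permutes_superset[OF p(1)]) (use p(2) in auto)
    then show "p \<in> {p. p permutes ({..<d} - {j})}" by simp
  next
    fix p assume "p \<in> {p. p permutes ({..<d} - {j})}"
    then have p: "p permutes ({..<d} - {j})" by simp
    have "p permutes {..<d}" by (rule permutes_subset[OF p]) auto
    moreover have "p j = j" by (rule permutes_not_in[OF p]) simp
    ultimately show "p \<in> {p. p permutes {..<d} \<and> p j = j}" by simp
  qed
  moreover have "card {p. p permutes ({..<d} - {j})} = fact (d - 1)"
    by (rule card_permutations) (use j in auto)
  ultimately show ?thesis by simp
qed

lemma card_perm_send:
  assumes j: "j < d" and k: "k < d"
  shows "card {p. p permutes {..<d} \<and> p j = k} = fact (d - 1)"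
proof -
  let ?A = "{p. p permutes {..<d} \<and> p j = j}"
  let ?B = "{p. p permutes {..<d} \<and> p j = k}"
  let ?t = "\<lambda>p. Transposition.transpose j k \<circ> p"
  have tperm: "Transposition.transpose j k permutes {..<d}" using j k by (intro permutes_swap_id) auto
  have inj: "inj_on ?t ?A"
  proof (rule inj_onI)
    fix p q assume "?t p = ?t q"
    then have "Transposition.transpose j k \<circ> (Transposition.transpose j k \<circ> p) = Transposition.transpose j k \<circ> (Transposition.transpose j k \<circ> q)" by simp
    then show "p = q" by (simp add: fun_eq_iff o_def)
  qed
  have img: "?t ` ?A = ?B"
  proof (intro set_eqI iffI)
    fix q assume "q \<in> ?t ` ?A"
    then obtain p where p: "p \<in> ?A" "q = ?t p" by blast
    then have "q permutes {..<d}" using tperm by (auto intro: permutes_compose)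
    moreover have "q j = k" using p by simp
    ultimately show "q \<in> ?B" by simp
  next
    fix q assume q: "q \<in> ?B"
    let ?p = "?t q"
    have "?p \<in> ?A" using q tperm by (auto intro: permutes_compose)
    moreover have "q = ?t ?p" by (simp add: fun_eq_iff o_def)
    ultimately show "q \<in> ?t ` ?A" by blast
  qed
  have "card ?B = card ?A" using card_image[OF inj] img by simp
  with card_perm_fix[OF j] show ?thesis by simp
qed

lemma perm_sum:
  fixes f :: "nat \<Rightarrow> real"
  assumes j: "j < d"
  shows "(\<Sum>p\<in>{p. p permutes {..<d}}. f (p j)) = fact (d - 1) * (\<Sum>k<d. f k)"
proof -
  let ?P = "{p. p permutes {..<d}}"
  have fin: "finite ?P" by (rule finite_permutations) simp
  have "(\<Sum>p\<in>?P. f (p j)) = (\<Sum>k<d. \<Sum>p\<in>{p\<in>?P. p j = k}. f (p j))"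
  proof (rule sum.group[symmetric, OF fin])
    show "finite {..<d}" by simp
    show "(\<lambda>p. p j) ` ?P \<subseteq> {..<d}"
    proof
      fix x assume "x \<in> (\<lambda>p. p j) ` ?P"
      then obtain p where "p permutes {..<d}" "x = p j" by blast
      then show "x \<in> {..<d}" using j by (metis lessThan_iff permutes_in_image)
    qed
  qed
  also have "\<dots> = (\<Sum>k<d. fact (d - 1) * f k)"
  proof (rule sum.cong[OF refl])
    fix k assume k: "k \<in> {..<d}"
    have "(\<Sum>p\<in>{p\<in>?P. p j = k}. f (p j)) = (\<Sum>p\<in>{p\<in>?P. p j = k}. f k)"
      by (rule sum.cong) auto
    also have "\<dots> = real (card {p\<in>?P. p j = k}) * f k" by simp
    also have "card {p\<in>?P. p j = k} = fact (d - 1)"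
      using card_perm_send[OF j, of k] k by simp
    finally show "(\<Sum>p\<in>{p\<in>?P. p j = k}. f (p j)) = fact (d - 1) * f k" by simp
  qed
  also have "\<dots> = fact (d - 1) * (\<Sum>k<d. f k)" by (simp add: sum_distrib_left)
  finally show ?thesis .
qed



lemma Fd_ccdf:
  assumes "in_Fd d F" "i < d" shows "ccdf (F i)"
  using assms unfolding in_Fd_def is_cdf1_def ccdf_def by auto

lemma Fd_bounds:
  assumes "in_Fd d F" "i < d" shows "0 \<le> F i x" "F i x \<le> 1"
  using ccdf_bounds[OF Fd_ccdf[OF assms]] by auto

lemma G_ccdf:
  assumes F: "in_Fd d F" and d: "0 < d" shows "ccdf (Gmix d F)"
proof -
  have c: "\<And>i. i < d \<Longrightarrow> ccdf (F i)" using Fd_ccdf[OF F] by blast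
  have "mono (Gmix d F)"
  proof (rule monoI)
    fix x y :: real assume "x \<le> y"
    then have "(\<Sum>i<d. F i x) \<le> (\<Sum>i<d. F i y)"
      using c by (intro sum_mono) (auto simp: ccdf_def dest: monoD)
    then show "Gmix d F x \<le> Gmix d F y" unfolding Gmix_def using d by (simp add: divide_right_mono)
  qed
  moreover have "(Gmix d F \<longlongrightarrow> 0) at_bot"
  proof -
    have "((\<lambda>t. (\<Sum>i<d. F i t) / real d) \<longlongrightarrow> (\<Sum>i<d. 0) / real d) at_bot"
      using c d by (intro tendsto_divide tendsto_sum) (auto simp: ccdf_def)
    then show ?thesis unfolding Gmix_def by simp
  qed
  moreover have "(Gmix d F \<longlongrightarrow> 1) at_top"
  proof -
    have "((\<lambda>t. (\<Sum>i<d. F i t) / real d) \<longlongrightarrow> (\<Sum>i<d. 1) / real d) at_top"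
      using c d by (intro tendsto_divide tendsto_sum) (auto simp: ccdf_def)
    then show ?thesis unfolding Gmix_def using d by simp
  qed
  moreover have "continuous_on UNIV (Gmix d F)"
  proof -
    have "continuous_on UNIV (\<lambda>t. (\<Sum>i<d. F i t) / real d)"
      using c d by (intro continuous_intros) (auto simp: ccdf_def)
    then show ?thesis unfolding Gmix_def by (simp add: fun_eq_iff)
  qed
  ultimately show ?thesis unfolding ccdf_def by blast
qed

lemma G_flat:
  assumes F: "in_Fd d F" and i: "i < d" and qx: "q \<le> x" and eq: "Gmix d F q = Gmix d F x"
  shows "F i q = F i x"
proof -
  have d: "0 < d" using i by simp
  have le: "\<And>k. k < d \<Longrightarrow> F k q \<le> F k x"
    using Fd_ccdf[OF F] qx by (auto simp: ccdf_def dest: monoD)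
  have "(\<Sum>k<d. F k q) = (\<Sum>k<d. F k x)" using eq d unfolding Gmix_def by simp
  then have "(\<Sum>k<d. F k x - F k q) = 0" by (simp add: sum_subtractf)
  moreover have "\<forall>k\<in>{..<d}. 0 \<le> F k x - F k q" using le by auto
  ultimately have "\<forall>k\<in>{..<d}. F k x - F k q = 0"
    using sum_nonneg_eq_0_iff[of "{..<d}" "\<lambda>k. F k x - F k q"] by simp
  with i show ?thesis by simp
qed

lemma G_zero:
  assumes F: "in_Fd d F" and i: "i < d" and z: "Gmix d F x \<le> 0"
  shows "F i x = 0"
proof -
  have d: "0 < d" using i by simp
  have nn: "\<And>k. k < d \<Longrightarrow> 0 \<le> F k x" using Fd_bounds[OF F] by blast
  have "(\<Sum>k<d. F k x) \<le> 0" using z d unfolding Gmix_def by (simp add: divide_le_0_iff)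
  moreover have "0 \<le> (\<Sum>k<d. F k x)" using nn by (intro sum_nonneg) auto
  ultimately have "(\<Sum>k<d. F k x) = 0" by simp
  then have "\<forall>k\<in>{..<d}. F k x = 0"
    using sum_nonneg_eq_0_iff[of "{..<d}" "\<lambda>k. F k x"] nn by simp
  with i show ?thesis by simp
qed

lemma FG:
  assumes F: "in_Fd d F" and i: "i < d"
  shows "ecdf (F i) (ginv (Gmix d F) (Gmix d F x)) = F i x"
proof -
  have d: "0 < d" using i by simp
  let ?G = "Gmix d F"
  have G: "ccdf ?G" by (rule G_ccdf[OF F d])
  have m: "mono ?G" and c: "continuous_on UNIV ?G" and l0: "(?G \<longlongrightarrow> 0) at_bot"
    using G by (auto simp: ccdf_def)
  have le: "ginv ?G (?G x) \<le> ereal x" using ginv_le_iff[OF m c] by simp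
  show ?thesis
  proof (cases "ginv ?G (?G x)")
    case (real q)
    with le have qx: "q \<le> x" by simp
    have "?G x \<le> ?G q" using ginv_le_iff[OF m c, of "?G x" q] real by simp
    moreover have "?G q \<le> ?G x" using m qx by (auto dest: monoD)
    ultimately have "?G q = ?G x" by simp
    with G_flat[OF F i qx] real show ?thesis by (simp add: ecdf_def)
  next
    case MInf
    then have "\<forall>s. ?G x \<le> ?G s" using ginv_le_iff[OF m c, of "?G x"] by simp
    then have "?G x \<le> 0"
      by (intro tendsto_lowerbound[OF l0]) auto
    with G_zero[OF F i] MInf show ?thesis by (simp add: ecdf_def)
  next
    case PInf with le show ?thesis by simp
  qed
qed



lemma law_eq_sets:
  fixes W1 :: "'a \<Rightarrow> nat \<Rightarrow> real" and W2 :: "'b \<Rightarrow> nat \<Rightarrow> real"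
  assumes P1: "prob_space M1" and P2: "prob_space M2"
    and m1: "\<forall>i<d. (\<lambda>\<omega>. W1 \<omega> i) \<in> borel_measurable M1"
    and m2: "\<forall>i<d. (\<lambda>\<omega>. W2 \<omega> i) \<in> borel_measurable M2"
    and eq: "\<And>x. measure M1 {\<omega>\<in>space M1. \<forall>i<d. W1 \<omega> i \<le> x i} = measure M2 {\<omega>\<in>space M2. \<forall>i<d. W2 \<omega> i \<le> x i}"
    and A: "A \<in> sets (PiM {..<d} (\<lambda>_. borel))"
  shows "measure M1 {\<omega>\<in>space M1. restrict (W1 \<omega>) {..<d} \<in> A} = measure M2 {\<omega>\<in>space M2. restrict (W2 \<omega>) {..<d} \<in> A}"
proof -
  have meas1: "(\<lambda>\<omega>. restrict (W1 \<omega>) {..<d}) \<in> measurable M1 (PiM {..<d} (\<lambda>_. borel))"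
    using m1 by (intro measurable_restrict) auto
  have meas2: "(\<lambda>\<omega>. restrict (W2 \<omega>) {..<d}) \<in> measurable M2 (PiM {..<d} (\<lambda>_. borel))"
    using m2 by (intro measurable_restrict) auto
  have e: "distr M1 (PiM {..<d} (\<lambda>_. borel)) (\<lambda>\<omega>. restrict (W1 \<omega>) {..<d})
       = distr M2 (PiM {..<d} (\<lambda>_. borel)) (\<lambda>\<omega>. restrict (W2 \<omega>) {..<d})"
    by (rule law_eq[OF P1 P2 m1 m2 eq])
  have "measure M1 {\<omega>\<in>space M1. restrict (W1 \<omega>) {..<d} \<in> A}
      = measure (distr M1 (PiM {..<d} (\<lambda>_. borel)) (\<lambda>\<omega>. restrict (W1 \<omega>) {..<d})) A"
    using meas1 A by (simp add: measure_distr vimage_def Collect_conj_eq Int_commute)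
  also have "\<dots> = measure (distr M2 (PiM {..<d} (\<lambda>_. borel)) (\<lambda>\<omega>. restrict (W2 \<omega>) {..<d})) A"
    by (simp only: e)
  also have "\<dots> = measure M2 {\<omega>\<in>space M2. restrict (W2 \<omega>) {..<d} \<in> A}"
    using meas2 A by (simp add: measure_distr vimage_def Collect_conj_eq Int_commute)
  finally show ?thesis .
qed

lemma AE_joint:
  fixes d :: nat
  assumes M: "prob_space M"
    and sP: "\<And>i. i < d \<Longrightarrow> {\<omega>\<in>space M. P i \<omega>} \<in> sets M"
    and sQ: "\<And>i. i < d \<Longrightarrow> {\<omega>\<in>space M. Q i \<omega>} \<in> sets M"
    and ae: "\<And>i. i < d \<Longrightarrow> AE \<omega> in M. P i \<omega> \<longleftrightarrow> Q i \<omega>"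
  shows "measure M {\<omega>\<in>space M. \<forall>i<d. P i \<omega>} = measure M {\<omega>\<in>space M. \<forall>i<d. Q i \<omega>}"
proof -
  have e1: "{\<omega>\<in>space M. \<forall>i<d. P i \<omega>} = {\<omega>\<in>space M. \<forall>i\<in>{..<d}. P i \<omega>}" by auto
  have e2: "{\<omega>\<in>space M. \<forall>i<d. Q i \<omega>} = {\<omega>\<in>space M. \<forall>i\<in>{..<d}. Q i \<omega>}" by auto
  have "AE \<omega> in M. \<forall>i\<in>{..<d}. (P i \<omega> \<longleftrightarrow> Q i \<omega>)"
    using ae by (subst AE_finite_all) auto
  then have "AE \<omega> in M. \<omega> \<in> {\<omega>\<in>space M. \<forall>i\<in>{..<d}. P i \<omega>} \<longleftrightarrow> \<omega> \<in> {\<omega>\<in>space M. \<forall>i\<in>{..<d}. Q i \<omega>}"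
    by eventually_elim auto
  moreover have "{\<omega>\<in>space M. \<forall>i\<in>{..<d}. P i \<omega>} \<in> sets M"
    using sP by (intro sets.sets_Collect_finite_All) auto
  moreover have "{\<omega>\<in>space M. \<forall>i\<in>{..<d}. Q i \<omega>} \<in> sets M"
    using sQ by (intro sets.sets_Collect_finite_All) auto
  ultimately show ?thesis unfolding e1 e2 by (rule measure_eq_AE)
qed



lemma sklar_cdf:
  assumes F: "in_Fd d F" and M: "prob_space M" and X: "rand_vec M d X"
    and mg: "\<forall>i<d. marg M X i = F i" and cop: "copula_of M d X C"
  shows "measure M {\<omega>\<in>space M. \<forall>i<d. X \<omega> i \<le> x i} = C (\<lambda>i. F i (x i))"
proof -
  interpret prob_space M by (rule M)
  have Xm: "\<And>i. i < d \<Longrightarrow> (\<lambda>\<omega>. X \<omega> i) \<in> borel_measurable M" using X by (auto simp: rand_vec_def)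
  have "C (\<lambda>i. F i (x i)) = vcdf M d X (\<lambda>i. ginv (marg M X i) (F i (x i)))"
    using cop by (simp add: copula_of_def)
  also have "\<dots> = measure M {\<omega>\<in>space M. \<forall>i<d. ereal (X \<omega> i) \<le> ginv (F i) (F i (x i))}"
    unfolding vcdf_def using mg by (intro arg_cong[where f="measure M"]) auto
  also have "\<dots> = measure M {\<omega>\<in>space M. \<forall>i<d. X \<omega> i \<le> x i}"
  proof (rule AE_joint[OF M])
    fix i assume i: "i < d"
    have [measurable]: "(\<lambda>\<omega>. X \<omega> i) \<in> borel_measurable M" using Xm[OF i] .
    show "{\<omega>\<in>space M. ereal (X \<omega> i) \<le> ginv (F i) (F i (x i))} \<in> sets M" by measurable
    show "{\<omega>\<in>space M. X \<omega> i \<le> x i} \<in> sets M" by measurable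
    have H: "ccdf (F i)" by (rule Fd_ccdf[OF F i])
    have cdf: "measure M {\<omega>\<in>space M. X \<omega> i \<le> s} = F i s" for s
    proof -
      have "marg M X i s = F i s" using mg i by simp
      then show ?thesis by (simp add: marg_def)
    qed
    have mH: "mono (F i)" "continuous_on UNIV (F i)" using H by (auto simp: ccdf_def)
    show "AE \<omega> in M. ereal (X \<omega> i) \<le> ginv (F i) (F i (x i)) \<longleftrightarrow> X \<omega> i \<le> x i"
    proof (rule sandwich_AE[OF M])
      show "{\<omega>\<in>space M. ereal (X \<omega> i) \<le> ginv (F i) (F i (x i))} \<in> sets M" by measurable
      show "{\<omega>\<in>space M. X \<omega> i \<le> x i} \<in> sets M" by measurable
      show "{\<omega>\<in>space M. X \<omega> i \<le> x i} \<in> sets M" by measurable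
      fix \<omega> assume "ereal (X \<omega> i) \<le> ginv (F i) (F i (x i))"
      moreover have "ginv (F i) (F i (x i)) \<le> ereal (x i)" using ginv_le_iff[OF mH] by simp
      ultimately show "X \<omega> i \<le> x i" by (metis ereal_less_eq(3) order_trans)
    next
      show "measure M {\<omega>\<in>space M. X \<omega> i \<le> x i} \<le> measure M {\<omega>\<in>space M. ereal (X \<omega> i) \<le> ginv (F i) (F i (x i))}"
        using ccdf_Q[OF M Xm[OF i] cdf H, of "F i (x i)"] cdf[of "x i"] ccdf_bounds[OF H, of "x i"] by simp
    qed simp
  qed
  finally show ?thesis by simp
qed

lemma X_ordered:
  assumes F: "in_Fd d F" and C: "in_COS d F C" and M: "prob_space M" and X: "rand_vec M d X"
    and mg: "\<forall>i<d. marg M X i = F i" and cop: "copula_of M d X C"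
  shows "AE \<omega> in M. \<forall>i. Suc i < d \<longrightarrow> X \<omega> i \<le> X \<omega> (Suc i)"
proof -
  obtain M' :: "(nat \<Rightarrow> real) measure" and X' where M': "prob_space M'" and X': "rand_vec M' d X'"
    and ord: "AE \<omega> in M'. \<forall>i. Suc i < d \<longrightarrow> X' \<omega> i \<le> X' \<omega> (Suc i)"
    and mg': "\<forall>i<d. marg M' X' i = F i" and cop': "copula_of M' d X' C"
    using C unfolding in_COS_def by blast
  let ?P = "PiM {..<d} (\<lambda>_. borel :: real measure)"
  define Ordset where "Ordset = {u\<in>space ?P. \<forall>i\<in>{..<d - 1}. u i \<le> u (Suc i)}"
  have sO: "Ordset \<in> sets ?P"
    unfolding Ordset_def
  proof (rule sets.sets_Collect_finite_All)
    fix i assume "i \<in> {..<d - 1}"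
    then have i1: "i \<in> {..<d}" and i2: "Suc i \<in> {..<d}" by auto
    have [measurable]: "(\<lambda>u. u i) \<in> borel_measurable ?P" by (rule measurable_component_singleton[OF i1])
    have [measurable]: "(\<lambda>u. u (Suc i)) \<in> borel_measurable ?P" by (rule measurable_component_singleton[OF i2])
    show "{u\<in>space ?P. u i \<le> u (Suc i)} \<in> sets ?P" by measurable
  qed simp
  have eqO: "\<And>Y \<omega>. (restrict (Y \<omega>) {..<d} \<in> Ordset) = (\<forall>i. Suc i < d \<longrightarrow> Y \<omega> i \<le> Y \<omega> (Suc i))"
  proof -
    fix Y :: "'c \<Rightarrow> nat \<Rightarrow> real" and \<omega>
    have "restrict (Y \<omega>) {..<d} \<in> space ?P" by (simp add: space_PiM)
    moreover have "(\<forall>i\<in>{..<d - 1}. restrict (Y \<omega>) {..<d} i \<le> restrict (Y \<omega>) {..<d} (Suc i))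
        = (\<forall>i. Suc i < d \<longrightarrow> Y \<omega> i \<le> Y \<omega> (Suc i))"
      by auto
    ultimately show "(restrict (Y \<omega>) {..<d} \<in> Ordset) = (\<forall>i. Suc i < d \<longrightarrow> Y \<omega> i \<le> Y \<omega> (Suc i))"
      unfolding Ordset_def by simp
  qed
  have mX: "\<forall>i<d. (\<lambda>\<omega>. X \<omega> i) \<in> borel_measurable M" using X by (simp add: rand_vec_def)
  have mX': "\<forall>i<d. (\<lambda>\<omega>. X' \<omega> i) \<in> borel_measurable M'" using X' by (simp add: rand_vec_def)
  have "measure M {\<omega>\<in>space M. restrict (X \<omega>) {..<d} \<in> Ordset} = measure M' {\<omega>\<in>space M'. restrict (X' \<omega>) {..<d} \<in> Ordset}"
    by (rule law_eq_sets[OF M M' mX mX' _ sO])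
       (simp add: sklar_cdf[OF F M X mg cop] sklar_cdf[OF F M' X' mg' cop'])
  also have "\<dots> = 1"
  proof -
    have mr: "(\<lambda>\<omega>. restrict (X' \<omega>) {..<d}) \<in> measurable M' ?P" using mX' by (intro measurable_restrict) auto
    have "(\<lambda>\<omega>. restrict (X' \<omega>) {..<d}) -` Ordset \<inter> space M' \<in> sets M'" using mr sO by (rule measurable_sets)
    moreover have "{\<omega>\<in>space M'. restrict (X' \<omega>) {..<d} \<in> Ordset} = (\<lambda>\<omega>. restrict (X' \<omega>) {..<d}) -` Ordset \<inter> space M'" by (rule set_eqI) auto
    ultimately have "{\<omega>\<in>space M'. restrict (X' \<omega>) {..<d} \<in> Ordset} \<in> sets M'" by (simp only:)
    then have s: "{\<omega>\<in>space M'. \<forall>i. Suc i < d \<longrightarrow> X' \<omega> i \<le> X' \<omega> (Suc i)} \<in> sets M'"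
      by (simp only: eqO)
    have "prob_space.prob M' {\<omega>\<in>space M'. \<forall>i. Suc i < d \<longrightarrow> X' \<omega> i \<le> X' \<omega> (Suc i)} = 1"
      using prob_space.prob_Collect_eq_1[OF M' s] ord by (rule iffD2)
    then show ?thesis by (simp only: eqO)
  qed
  finally have "measure M {\<omega>\<in>space M. restrict (X \<omega>) {..<d} \<in> Ordset} = 1" .
  moreover have "{\<omega>\<in>space M. restrict (X \<omega>) {..<d} \<in> Ordset} \<in> sets M"
  proof -
    have mr: "(\<lambda>\<omega>. restrict (X \<omega>) {..<d}) \<in> measurable M ?P" using mX by (intro measurable_restrict) auto
    have "(\<lambda>\<omega>. restrict (X \<omega>) {..<d}) -` Ordset \<inter> space M \<in> sets M" using mr sO by (rule measurable_sets)
    moreover have "{\<omega>\<in>space M. restrict (X \<omega>) {..<d} \<in> Ordset} = (\<lambda>\<omega>. restrict (X \<omega>) {..<d}) -` Ordset \<inter> space M" by (rule set_eqI) auto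
    ultimately show ?thesis by (simp only:)
  qed
  ultimately show ?thesis
  proof -
    assume a1: "measure M {\<omega>\<in>space M. restrict (X \<omega>) {..<d} \<in> Ordset} = 1"
      and a2: "{\<omega>\<in>space M. restrict (X \<omega>) {..<d} \<in> Ordset} \<in> sets M"
    have s: "{\<omega>\<in>space M. \<forall>i. Suc i < d \<longrightarrow> X \<omega> i \<le> X \<omega> (Suc i)} \<in> sets M"
      using a2 by (simp only: eqO)
    have p: "measure M {\<omega>\<in>space M. \<forall>i. Suc i < d \<longrightarrow> X \<omega> i \<le> X \<omega> (Suc i)} = 1"
      using a1 by (simp only: eqO)
    show ?thesis using prob_space.prob_Collect_eq_1[OF M s] p by (rule iffD1)
  qed
qed



lemma Perm_comp_meas:
  fixes d :: nat and Perm :: "'a \<Rightarrow> nat \<Rightarrow> nat"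
  assumes Perm_perm: "\<forall>\<omega>\<in>space M. Perm \<omega> permutes {..<d}"
    and Perm_meas: "Perm \<in> measurable M (count_space UNIV)" and j: "j < d"
  shows "(\<lambda>\<omega>. Perm \<omega> j) \<in> measurable M (count_space {..<d})"
proof (subst measurable_count_space_eq2)
  show "finite {..<d}" by simp
  show "(\<lambda>\<omega>. Perm \<omega> j) \<in> space M \<rightarrow> {..<d} \<and> (\<forall>a\<in>{..<d}. (\<lambda>\<omega>. Perm \<omega> j) -` {a} \<inter> space M \<in> sets M)"
  proof
    show "(\<lambda>\<omega>. Perm \<omega> j) \<in> space M \<rightarrow> {..<d}"
    proof
      fix \<omega> assume "\<omega> \<in> space M"
      then have "Perm \<omega> permutes {..<d}" using Perm_perm by blast
      then show "Perm \<omega> j \<in> {..<d}" using j by (metis lessThan_iff permutes_in_image)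
    qed
    show "\<forall>a\<in>{..<d}. (\<lambda>\<omega>. Perm \<omega> j) -` {a} \<inter> space M \<in> sets M"
    proof
      fix a
      have "Perm -` {p. p j = a} \<inter> space M \<in> sets M"
        by (rule measurable_sets[OF Perm_meas]) simp
      moreover have "(\<lambda>\<omega>. Perm \<omega> j) -` {a} \<inter> space M = Perm -` {p. p j = a} \<inter> space M" by auto
      ultimately show "(\<lambda>\<omega>. Perm \<omega> j) -` {a} \<inter> space M \<in> sets M" by simp
    qed
  qed
qed

lemma Y_meas:
  fixes d :: nat and Perm :: "'a \<Rightarrow> nat \<Rightarrow> nat"
  assumes X: "rand_vec M d X"
    and Perm_perm: "\<forall>\<omega>\<in>space M. Perm \<omega> permutes {..<d}"
    and Perm_meas: "Perm \<in> measurable M (count_space UNIV)" and j: "j < d"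
  shows "(\<lambda>\<omega>. X \<omega> (Perm \<omega> j)) \<in> borel_measurable M"
proof (rule measurable_compose_countable'[where I="{..<d}" and f="\<lambda>k \<omega>. X \<omega> k"])
  show "\<And>k. k \<in> {..<d} \<Longrightarrow> (\<lambda>\<omega>. X \<omega> k) \<in> borel_measurable M" using X by (simp add: rand_vec_def)
  show "(\<lambda>\<omega>. Perm \<omega> j) \<in> measurable M (count_space {..<d})" by (rule Perm_comp_meas[OF Perm_perm Perm_meas j])
qed simp

lemma Y_marg:
  fixes d :: nat and Perm :: "'a \<Rightarrow> nat \<Rightarrow> nat"
  assumes F: "in_Fd d F" and M: "prob_space M" and X: "rand_vec M d X"
    and Xmarg: "\<forall>i<d. marg M X i = F i"
    and Perm_perm: "\<forall>\<omega>\<in>space M. Perm \<omega> permutes {..<d}"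
    and Perm_meas: "Perm \<in> measurable M (count_space UNIV)"
    and Perm_unif: "\<forall>p. p permutes {..<d} \<longrightarrow>
                    measure M {\<omega> \<in> space M. Perm \<omega> = p} = 1 / fact d"
    and indep: "\<forall>A \<in> sets (PiM {..<d} (\<lambda>_. borel)). \<forall>p.
                  measure M {\<omega> \<in> space M. restrict (X \<omega>) {..<d} \<in> A \<and> Perm \<omega> = p}
                  = measure M {\<omega> \<in> space M. restrict (X \<omega>) {..<d} \<in> A}
                    * measure M {\<omega> \<in> space M. Perm \<omega> = p}"
    and j: "j < d"
  shows "marg M (\<lambda>\<omega> i. X \<omega> (Perm \<omega> i)) j = Gmix d F"
proof
  fix t
  interpret prob_space M by (rule M)
  let ?P = "{p. p permutes {..<d}}"
  let ?I = "{..<d}"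
  let ?Pi = "PiM ?I (\<lambda>_. borel :: real measure)"
  define A where "A p = {u\<in>space ?Pi. u (p j) \<le> t}" for p :: "nat \<Rightarrow> nat"
  define E where "E p = {\<omega>\<in>space M. restrict (X \<omega>) ?I \<in> A p \<and> Perm \<omega> = p}" for p
  have fin: "finite ?P" by (rule finite_permutations) simp
  have pj: "p j \<in> ?I" if "p \<in> ?P" for p using that j by (metis lessThan_iff mem_Collect_eq permutes_in_image)
  have mX: "\<And>k. k < d \<Longrightarrow> (\<lambda>\<omega>. X \<omega> k) \<in> borel_measurable M" using X by (simp add: rand_vec_def)
  have mr: "(\<lambda>\<omega>. restrict (X \<omega>) ?I) \<in> measurable M ?Pi" using mX by (intro measurable_restrict) auto
  have sA: "A p \<in> sets ?Pi" if "p \<in> ?P" for p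
  proof -
    have [measurable]: "(\<lambda>u. u (p j)) \<in> borel_measurable ?Pi"
      by (rule measurable_component_singleton[OF pj[OF that]])
    show ?thesis unfolding A_def by measurable
  qed
  have sPerm: "{\<omega>\<in>space M. Perm \<omega> = p} \<in> sets M" for p
  proof -
    have "Perm -` {p} \<inter> space M \<in> sets M" by (rule measurable_sets[OF Perm_meas]) simp
    moreover have "{\<omega>\<in>space M. Perm \<omega> = p} = Perm -` {p} \<inter> space M" by auto
    ultimately show ?thesis by simp
  qed
  have sXA: "{\<omega>\<in>space M. restrict (X \<omega>) ?I \<in> A p} \<in> sets M" if "p \<in> ?P" for p
  proof -
    have "(\<lambda>\<omega>. restrict (X \<omega>) ?I) -` A p \<inter> space M \<in> sets M" by (rule measurable_sets[OF mr sA[OF that]])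
    moreover have "{\<omega>\<in>space M. restrict (X \<omega>) ?I \<in> A p} = (\<lambda>\<omega>. restrict (X \<omega>) ?I) -` A p \<inter> space M"
      by (rule set_eqI) auto
    ultimately show ?thesis by (simp only:)
  qed
  have sE: "E p \<in> sets M" if "p \<in> ?P" for p
  proof -
    have "E p = {\<omega>\<in>space M. restrict (X \<omega>) ?I \<in> A p} \<inter> {\<omega>\<in>space M. Perm \<omega> = p}"
      unfolding E_def by (rule set_eqI) auto
    then show ?thesis using sXA[OF that] sPerm by simp
  qed
  have XA: "{\<omega>\<in>space M. restrict (X \<omega>) ?I \<in> A p} = {\<omega>\<in>space M. X \<omega> (p j) \<le> t}" if "p \<in> ?P" for p
  proof (rule set_eqI)
    fix \<omega>
    have "restrict (X \<omega>) ?I \<in> space ?Pi" by (simp add: space_PiM)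
    then show "\<omega> \<in> {\<omega>\<in>space M. restrict (X \<omega>) ?I \<in> A p} \<longleftrightarrow> \<omega> \<in> {\<omega>\<in>space M. X \<omega> (p j) \<le> t}"
      unfolding A_def using pj[OF that] by simp
  qed
  have un: "{\<omega>\<in>space M. X \<omega> (Perm \<omega> j) \<le> t} = (\<Union>p\<in>?P. E p)"
  proof (rule set_eqI)
    fix \<omega>
    show "\<omega> \<in> {\<omega>\<in>space M. X \<omega> (Perm \<omega> j) \<le> t} \<longleftrightarrow> \<omega> \<in> (\<Union>p\<in>?P. E p)"
    proof
      assume a: "\<omega> \<in> {\<omega>\<in>space M. X \<omega> (Perm \<omega> j) \<le> t}"
      then have sp: "\<omega> \<in> space M" and le: "X \<omega> (Perm \<omega> j) \<le> t" by auto
      have pp: "Perm \<omega> \<in> ?P" using Perm_perm sp by blast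
      have "restrict (X \<omega>) ?I \<in> space ?Pi" by (simp add: space_PiM)
      then have "\<omega> \<in> E (Perm \<omega>)" unfolding E_def A_def using sp le pj[OF pp] by simp
      with pp show "\<omega> \<in> (\<Union>p\<in>?P. E p)" by blast
    next
      assume "\<omega> \<in> (\<Union>p\<in>?P. E p)"
      then obtain p where p: "p \<in> ?P" "\<omega> \<in> E p" by blast
      then show "\<omega> \<in> {\<omega>\<in>space M. X \<omega> (Perm \<omega> j) \<le> t}"
        unfolding E_def A_def using pj[OF p(1)] by auto
    qed
  qed
  have "marg M (\<lambda>\<omega> i. X \<omega> (Perm \<omega> i)) j t = measure M (\<Union>p\<in>?P. E p)"
    unfolding marg_def un ..
  also have "\<dots> = (\<Sum>p\<in>?P. measure M (E p))"
  proof (rule finite_measure_finite_Union[OF fin])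
    show "E ` ?P \<subseteq> sets M" using sE by blast
    show "disjoint_family_on E ?P" unfolding disjoint_family_on_def E_def by auto
  qed
  also have "\<dots> = (\<Sum>p\<in>?P. F (p j) t / fact d)"
  proof (rule sum.cong[OF refl])
    fix p assume p: "p \<in> ?P"
    have "measure M (E p) = measure M {\<omega>\<in>space M. restrict (X \<omega>) ?I \<in> A p} * measure M {\<omega>\<in>space M. Perm \<omega> = p}"
      unfolding E_def using indep sA[OF p] by blast
    also have "\<dots> = measure M {\<omega>\<in>space M. X \<omega> (p j) \<le> t} * (1 / fact d)"
      using XA[OF p] Perm_unif p by simp
    also have "measure M {\<omega>\<in>space M. X \<omega> (p j) \<le> t} = F (p j) t"
    proof -
      have "marg M X (p j) t = F (p j) t" using Xmarg pj[OF p] by simp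
      then show ?thesis by (simp add: marg_def)
    qed
    finally show "measure M (E p) = F (p j) t / fact d" by simp
  qed
  also have "\<dots> = (\<Sum>p\<in>?P. F (p j) t) / fact d" by (simp add: sum_divide_distrib)
  also have "(\<Sum>p\<in>?P. F (p j) t) = fact (d - 1) * (\<Sum>k<d. F k t)"
    by (rule perm_sum[OF j])
  also have "fact (d - 1) * (\<Sum>k<d. F k t) / fact d = (\<Sum>k<d. F k t) / real d"
  proof -
    have "fact d = (real d * fact (d - 1) :: real)" using j by (metis fact_reduce gr_implies_not_zero of_nat_0_less_iff of_nat_fact zero_less_iff_neq_zero)
    then show ?thesis using j by (simp add: field_simps)
  qed
  finally show "marg M (\<lambda>\<omega> i. X \<omega> (Perm \<omega> i)) j t = Gmix d F t" by (simp add: Gmix_def)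
qed



lemma V_cdf:
  fixes d :: nat and Perm :: "'a \<Rightarrow> nat \<Rightarrow> nat"
  assumes F: "in_Fd d F" and M: "prob_space M" and X: "rand_vec M d X"
    and Xmarg: "\<forall>i<d. marg M X i = F i"
    and Perm_perm: "\<forall>\<omega>\<in>space M. Perm \<omega> permutes {..<d}"
    and Perm_meas: "Perm \<in> measurable M (count_space UNIV)"
    and Perm_unif: "\<forall>p. p permutes {..<d} \<longrightarrow>
                    measure M {\<omega> \<in> space M. Perm \<omega> = p} = 1 / fact d"
    and indep: "\<forall>A \<in> sets (PiM {..<d} (\<lambda>_. borel)). \<forall>p.
                  measure M {\<omega> \<in> space M. restrict (X \<omega>) {..<d} \<in> A \<and> Perm \<omega> = p}
                  = measure M {\<omega> \<in> space M. restrict (X \<omega>) {..<d} \<in> A}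
                    * measure M {\<omega> \<in> space M. Perm \<omega> = p}"
    and S: "copula_of M d (\<lambda>\<omega> i. X \<omega> (Perm \<omega> i)) S"
  shows "measure M {\<omega>\<in>space M. \<forall>i<d. Gmix d F (X \<omega> (Perm \<omega> i)) \<le> x i} = S x"
proof -
  interpret prob_space M by (rule M)
  let ?G = "Gmix d F"
  have Ym: "\<And>i. i < d \<Longrightarrow> (\<lambda>\<omega>. X \<omega> (Perm \<omega> i)) \<in> borel_measurable M"
    by (rule Y_meas[OF X Perm_perm Perm_meas])
  have Yg: "\<And>i. i < d \<Longrightarrow> marg M (\<lambda>\<omega> i. X \<omega> (Perm \<omega> i)) i = ?G"
    by (rule Y_marg[OF F M X Xmarg Perm_perm Perm_meas Perm_unif indep])
  have "S x = vcdf M d (\<lambda>\<omega> i. X \<omega> (Perm \<omega> i)) (\<lambda>i. ginv (marg M (\<lambda>\<omega> i. X \<omega> (Perm \<omega> i)) i) (x i))"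
    using S by (simp add: copula_of_def)
  also have "\<dots> = measure M {\<omega>\<in>space M. \<forall>i<d. ereal (X \<omega> (Perm \<omega> i)) \<le> ginv ?G (x i)}"
    unfolding vcdf_def using Yg by (intro arg_cong[where f="measure M"]) auto
  also have "\<dots> = measure M {\<omega>\<in>space M. \<forall>i<d. ?G (X \<omega> (Perm \<omega> i)) \<le> x i}"
  proof (rule AE_joint[OF M])
    fix i assume i: "i < d"
    have d: "0 < d" using i by simp
    have G: "ccdf ?G" by (rule G_ccdf[OF F d])
    have mG: "mono ?G" "continuous_on UNIV ?G" using G by (auto simp: ccdf_def)
    have [measurable]: "?G \<in> borel_measurable borel" using mG(2) by (rule borel_measurable_continuous_onI)
    have [measurable]: "(\<lambda>\<omega>. X \<omega> (Perm \<omega> i)) \<in> borel_measurable M" using Ym[OF i] .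
    show s1: "{\<omega>\<in>space M. ereal (X \<omega> (Perm \<omega> i)) \<le> ginv ?G (x i)} \<in> sets M" by measurable
    show s2: "{\<omega>\<in>space M. ?G (X \<omega> (Perm \<omega> i)) \<le> x i} \<in> sets M" by measurable
    have cdf: "measure M {\<omega>\<in>space M. X \<omega> (Perm \<omega> i) \<le> s} = ?G s" for s
    proof -
      have "marg M (\<lambda>\<omega> i. X \<omega> (Perm \<omega> i)) i s = ?G s" using Yg[OF i] by simp
      then show ?thesis by (simp add: marg_def)
    qed
    show "AE \<omega> in M. ereal (X \<omega> (Perm \<omega> i)) \<le> ginv ?G (x i) \<longleftrightarrow> ?G (X \<omega> (Perm \<omega> i)) \<le> x i"
    proof (rule sandwich_AE[OF M s1 s2 s2])
      fix \<omega> assume "ereal (X \<omega> (Perm \<omega> i)) \<le> ginv ?G (x i)"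
      then show "?G (X \<omega> (Perm \<omega> i)) \<le> x i" by (rule le_ginv_imp[OF mG])
    next
      have Q: "measure M {\<omega>\<in>space M. ereal (X \<omega> (Perm \<omega> i)) \<le> ginv ?G (x i)} = min 1 (max 0 (x i))"
        by (rule ccdf_Q[OF M Ym[OF i] cdf G])
      show "measure M {\<omega>\<in>space M. ?G (X \<omega> (Perm \<omega> i)) \<le> x i}
          \<le> measure M {\<omega>\<in>space M. ereal (X \<omega> (Perm \<omega> i)) \<le> ginv ?G (x i)}"
      proof (cases "0 \<le> x i")
        case True
        have "measure M {\<omega>\<in>space M. ?G (X \<omega> (Perm \<omega> i)) \<le> x i} \<le> x i"
          by (rule ccdf_PIT_le[OF M Ym[OF i] cdf G True])
        moreover have "measure M {\<omega>\<in>space M. ?G (X \<omega> (Perm \<omega> i)) \<le> x i} \<le> 1" by simp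
        ultimately show ?thesis using Q True by simp
      next
        case False
        have "{\<omega>\<in>space M. ?G (X \<omega> (Perm \<omega> i)) \<le> x i} = {}"
          using False ccdf_bounds(1)[OF G] by (auto simp: not_le intro: less_le_trans)
        then have "measure M {\<omega>\<in>space M. ?G (X \<omega> (Perm \<omega> i)) \<le> x i} = 0" by (simp only: measure_empty)
        then show ?thesis using Q by simp
      qed
    qed simp
  qed
  finally show ?thesis by simp
qed



lemma chain_mono:
  fixes w :: "nat \<Rightarrow> real"
  assumes "\<forall>i. Suc i < d \<longrightarrow> w i \<le> w (Suc i)" "k \<le> k'" "k' < d"
  shows "w k \<le> w k'"
  using assms(2,3)
proof (induction k' rule: dec_induct)
  case base then show ?case by simp
next
  case (step n)
  then have "w k \<le> w n" by simp
  also have "w n \<le> w (Suc n)" using assms(1) step by blast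
  finally show ?case .
qed

lemma transport:
  fixes d :: nat and Perm :: "'a \<Rightarrow> nat \<Rightarrow> nat" and U :: "'b \<Rightarrow> nat \<Rightarrow> real"
  assumes F: "in_Fd d F" and C: "in_COS d F C" and M: "prob_space M" and X: "rand_vec M d X"
    and Xmarg: "\<forall>i<d. marg M X i = F i"
    and Xcop: "copula_of M d X C"
    and Perm_perm: "\<forall>\<omega>\<in>space M. Perm \<omega> permutes {..<d}"
    and Perm_meas: "Perm \<in> measurable M (count_space UNIV)"
    and Perm_unif: "\<forall>p. p permutes {..<d} \<longrightarrow>
                    measure M {\<omega> \<in> space M. Perm \<omega> = p} = 1 / fact d"
    and indep: "\<forall>A \<in> sets (PiM {..<d} (\<lambda>_. borel)). \<forall>p.
                  measure M {\<omega> \<in> space M. restrict (X \<omega>) {..<d} \<in> A \<and> Perm \<omega> = p}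
                  = measure M {\<omega> \<in> space M. restrict (X \<omega>) {..<d} \<in> A}
                    * measure M {\<omega> \<in> space M. Perm \<omega> = p}"
    and S: "copula_of M d (\<lambda>\<omega> i. X \<omega> (Perm \<omega> i)) S"
    and N: "prob_space N" and U: "rand_vec N d U" and cdfU: "has_cdf N d U S"
    and Dm: "\<And>i. i < d \<Longrightarrow> D i \<in> sets borel"
    and Dd: "\<And>i x y. i < d \<Longrightarrow> y \<in> D i \<Longrightarrow> x \<le> y \<Longrightarrow> x \<in> D i"
  shows "measure N {\<omega>\<in>space N. \<forall>i<d. ordstat d (U \<omega>) i \<in> D i}
       = measure M {\<omega>\<in>space M. \<forall>i<d. Gmix d F (X \<omega> i) \<in> D i}"
proof -
  let ?I = "{..<d}"
  let ?Pi = "PiM ?I (\<lambda>_. borel :: real measure)"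
  let ?G = "Gmix d F"
  define cnt where "cnt E u = (\<Sum>k<d. of_bool (u k \<in> E) :: real)" for E :: "real set" and u :: "nat \<Rightarrow> real"
  define Aset where "Aset = {u\<in>space ?Pi. \<forall>i\<in>?I. real i < cnt (D i) u}"
  define V where "V \<omega> k = ?G (X \<omega> (Perm \<omega> k))" for \<omega> k
  have sAset: "Aset \<in> sets ?Pi"
    unfolding Aset_def
  proof (rule sets.sets_Collect_finite_All)
    fix i assume i: "i \<in> ?I"
    have [measurable]: "D i \<in> sets borel" using Dm i by simp
    have cm: "(\<lambda>u. cnt (D i) u) \<in> borel_measurable ?Pi"
      unfolding cnt_def
    proof (rule borel_measurable_sum)
      fix k assume k: "k \<in> ?I"
      have [measurable]: "(\<lambda>u. u k) \<in> borel_measurable ?Pi" by (rule measurable_component_singleton[OF k])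
      have "(\<lambda>u. indicator (D i) (u k) :: real) \<in> borel_measurable ?Pi" by measurable
      moreover have "(\<lambda>u. of_bool (u k \<in> D i) :: real) = (\<lambda>u. indicator (D i) (u k))"
        by (simp add: fun_eq_iff indicator_def)
      ultimately show "(\<lambda>u. of_bool (u k \<in> D i) :: real) \<in> borel_measurable ?Pi" by simp
    qed
    show "{u\<in>space ?Pi. real i < cnt (D i) u} \<in> sets ?Pi" using cm by measurable
  qed simp
  have mU: "\<forall>i<d. (\<lambda>\<omega>. U \<omega> i) \<in> borel_measurable N" using U by (simp add: rand_vec_def)
  have mV: "\<forall>i<d. (\<lambda>\<omega>. V \<omega> i) \<in> borel_measurable M"
  proof (intro allI impI)
    fix i assume i: "i < d"
    have d: "0 < d" using i by simp
    have [measurable]: "?G \<in> borel_measurable borel"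
      using G_ccdf[OF F d] by (intro borel_measurable_continuous_onI) (simp add: ccdf_def)
    have [measurable]: "(\<lambda>\<omega>. X \<omega> (Perm \<omega> i)) \<in> borel_measurable M"
      by (rule Y_meas[OF X Perm_perm Perm_meas i])
    show "(\<lambda>\<omega>. V \<omega> i) \<in> borel_measurable M" unfolding V_def by measurable
  qed
  have cntr: "cnt E (restrict f ?I) = cnt E f" for E f
    unfolding cnt_def by (rule sum.cong) auto
  have inA: "restrict f ?I \<in> Aset \<longleftrightarrow> (\<forall>i<d. real i < cnt (D i) f)" for f
  proof -
    have "restrict f ?I \<in> space ?Pi" by (simp add: space_PiM)
    then show ?thesis by (simp add: Aset_def cntr lessThan_iff Ball_def)
  qed
  have "measure N {\<omega>\<in>space N. \<forall>i<d. ordstat d (U \<omega>) i \<in> D i}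
      = measure N {\<omega>\<in>space N. restrict (U \<omega>) ?I \<in> Aset}"
  proof -
    have "(\<forall>i<d. ordstat d (U \<omega>) i \<in> D i) \<longleftrightarrow> restrict (U \<omega>) ?I \<in> Aset" for \<omega>
    proof -
      have "(\<forall>i<d. ordstat d (U \<omega>) i \<in> D i) \<longleftrightarrow> (\<forall>i<d. real i < cnt (D i) (U \<omega>))"
      proof -
        have "ordstat d (U \<omega>) i \<in> D i \<longleftrightarrow> real i < cnt (D i) (U \<omega>)" if i: "i < d" for i
        proof -
          have "\<And>x y. y \<in> D i \<Longrightarrow> x \<le> y \<Longrightarrow> x \<in> D i" using Dd[OF i] by blast
          from ordstat_in[OF this i] show ?thesis by (simp add: cnt_def)
        qed
        then show ?thesis by blast
      qed
      then show ?thesis using inA by simp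
    qed
    then show ?thesis by simp
  qed
  also have "\<dots> = measure M {\<omega>\<in>space M. restrict (V \<omega>) ?I \<in> Aset}"
  proof (rule law_eq_sets[OF N M mU mV _ sAset])
    fix x
    have "measure N {\<omega>\<in>space N. \<forall>i<d. U \<omega> i \<le> x i} = S x" using cdfU by (simp add: has_cdf_def)
    also have "\<dots> = measure M {\<omega>\<in>space M. \<forall>i<d. V \<omega> i \<le> x i}"
      unfolding V_def by (rule V_cdf[OF F M X Xmarg Perm_perm Perm_meas Perm_unif indep S, symmetric])
    finally show "measure N {\<omega>\<in>space N. \<forall>i<d. U \<omega> i \<le> x i} = measure M {\<omega>\<in>space M. \<forall>i<d. V \<omega> i \<le> x i}" .
  qed
  also have "\<dots> = measure M {\<omega>\<in>space M. \<forall>i<d. ?G (X \<omega> i) \<in> D i}"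
  proof (rule measure_eq_AE)
    have ord: "AE \<omega> in M. \<forall>i. Suc i < d \<longrightarrow> X \<omega> i \<le> X \<omega> (Suc i)"
      by (rule X_ordered[OF F C M X Xmarg Xcop])
    show "AE \<omega> in M. \<omega> \<in> {\<omega>\<in>space M. restrict (V \<omega>) ?I \<in> Aset} \<longleftrightarrow> \<omega> \<in> {\<omega>\<in>space M. \<forall>i<d. ?G (X \<omega> i) \<in> D i}"
      using ord AE_space
    proof eventually_elim
      case (elim \<omega>)
      then have sp: "\<omega> \<in> space M" and o: "\<forall>i. Suc i < d \<longrightarrow> X \<omega> i \<le> X \<omega> (Suc i)" by auto
      have pc: "cnt E (V \<omega>) = cnt E (\<lambda>k. ?G (X \<omega> k))" for E
      proof -
        have p: "Perm \<omega> permutes ?I" using Perm_perm sp by blast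
        have "cnt E (\<lambda>k. ?G (X \<omega> k)) = (\<Sum>k\<in>?I. of_bool (?G (X \<omega> k) \<in> E))" by (simp add: cnt_def)
        also have "\<dots> = (\<Sum>k\<in>?I. ((\<lambda>k. of_bool (?G (X \<omega> k) \<in> E)) \<circ> Perm \<omega>) k)"
          by (rule sum.permute[OF p])
        also have "\<dots> = cnt E (V \<omega>)" by (simp add: cnt_def V_def)
        finally show ?thesis by simp
      qed
      have "(\<forall>i<d. real i < cnt (D i) (V \<omega>)) \<longleftrightarrow> (\<forall>i<d. ?G (X \<omega> i) \<in> D i)"
      proof -
        have "real i < cnt (D i) (\<lambda>k. ?G (X \<omega> k)) \<longleftrightarrow> ?G (X \<omega> i) \<in> D i" if i: "i < d" for i
        proof -
          have d: "0 < d" using i by simp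
          have mG: "mono ?G" using G_ccdf[OF F d] by (simp add: ccdf_def)
          have "?G (X \<omega> i) \<in> D i \<longleftrightarrow> real i < (\<Sum>k<d. of_bool (?G (X \<omega> k) \<in> D i))"
          proof (rule mono_count[OF _ _ i])
            fix k k' assume "k \<le> k'" "k' < d"
            then have "X \<omega> k \<le> X \<omega> k'" by (rule chain_mono[OF o])
            then show "?G (X \<omega> k) \<le> ?G (X \<omega> k')" using mG by (auto dest: monoD)
          next
            fix x y assume "y \<in> D i" "x \<le> y" then show "x \<in> D i" using Dd[OF i] by blast
          qed
          then show ?thesis by (simp add: cnt_def)
        qed
        then show ?thesis using pc by simp
      qed
      then show ?case using sp inA by simp
    qed
    have mr: "(\<lambda>\<omega>. restrict (V \<omega>) ?I) \<in> measurable M ?Pi" using mV by (intro measurable_restrict) auto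
    have "(\<lambda>\<omega>. restrict (V \<omega>) ?I) -` Aset \<inter> space M \<in> sets M" using mr sAset by (rule measurable_sets)
    moreover have "{\<omega>\<in>space M. restrict (V \<omega>) ?I \<in> Aset} = (\<lambda>\<omega>. restrict (V \<omega>) ?I) -` Aset \<inter> space M"
      by (rule set_eqI) auto
    ultimately show "{\<omega>\<in>space M. restrict (V \<omega>) ?I \<in> Aset} \<in> sets M" by (simp only:)
    show "{\<omega>\<in>space M. \<forall>i<d. ?G (X \<omega> i) \<in> D i} \<in> sets M"
    proof -
      have e: "{\<omega>\<in>space M. \<forall>i<d. ?G (X \<omega> i) \<in> D i} = {\<omega>\<in>space M. \<forall>i\<in>?I. ?G (X \<omega> i) \<in> D i}" by auto
      show ?thesis unfolding e
      proof (rule sets.sets_Collect_finite_All)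
        fix i assume i: "i \<in> ?I"
        have d: "0 < d" using i by simp
        have [measurable]: "?G \<in> borel_measurable borel"
          using G_ccdf[OF F d] by (intro borel_measurable_continuous_onI) (simp add: ccdf_def)
        have [measurable]: "(\<lambda>\<omega>. X \<omega> i) \<in> borel_measurable M" using X i by (simp add: rand_vec_def)
        have [measurable]: "D i \<in> sets borel" using Dm i by simp
        show "{\<omega>\<in>space M. ?G (X \<omega> i) \<in> D i} \<in> sets M" by measurable
      qed simp
    qed
  qed
  finally show ?thesis .
qed



lemma ecdf_bounds:
  assumes "ccdf H" shows "0 \<le> ecdf H a" "ecdf H a \<le> 1"
  using ccdf_bounds[OF assms] by (auto simp: ecdf_def)

lemma GX_cdf:
  assumes F: "in_Fd d F" and M: "prob_space M" and Xi: "(\<lambda>\<omega>. X \<omega> i) \<in> borel_measurable M"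
    and mg: "marg M X i = F i" and i: "i < d"
  shows "measure M {\<omega>\<in>space M. Gmix d F (X \<omega> i) \<le> t} = ecdf (F i) (ginv (Gmix d F) t)"
proof -
  interpret prob_space M by (rule M)
  let ?G = "Gmix d F"
  let ?c = "ecdf (F i) (ginv ?G t)"
  have d: "0 < d" using i by simp
  have G: "ccdf ?G" by (rule G_ccdf[OF F d])
  have Fi: "ccdf (F i)" by (rule Fd_ccdf[OF F i])
  have mG: "mono ?G" "continuous_on UNIV ?G" using G by (auto simp: ccdf_def)
  have mF: "mono (F i)" "continuous_on UNIV (F i)" using Fi by (auto simp: ccdf_def)
  have [measurable]: "?G \<in> borel_measurable borel" using mG(2) by (rule borel_measurable_continuous_onI)
  have [measurable]: "F i \<in> borel_measurable borel" using mF(2) by (rule borel_measurable_continuous_onI)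
  have [measurable]: "(\<lambda>\<omega>. X \<omega> i) \<in> borel_measurable M" by (rule Xi)
  have cdf: "measure M {\<omega>\<in>space M. X \<omega> i \<le> s} = F i s" for s
    using mg by (simp add: marg_def fun_eq_iff)
  have c0: "0 \<le> ?c" by (rule ecdf_bounds[OF Fi])
  have mA: "measure M {\<omega>\<in>space M. ereal (X \<omega> i) \<le> ginv ?G t} = ?c"
  proof (cases "ginv ?G t")
    case (real q) then show ?thesis using cdf[of q] by (simp add: ecdf_def)
  next
    case PInf then show ?thesis by (simp add: ecdf_def prob_space)
  next
    case MInf then show ?thesis by (simp add: ecdf_def)
  qed
  have AB: "{\<omega>\<in>space M. ereal (X \<omega> i) \<le> ginv ?G t} \<subseteq> {\<omega>\<in>space M. ?G (X \<omega> i) \<le> t}"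
    using le_ginv_imp[OF mG] by blast
  have BC: "{\<omega>\<in>space M. ?G (X \<omega> i) \<le> t} \<subseteq> {\<omega>\<in>space M. F i (X \<omega> i) \<le> ?c}"
  proof (rule subsetI)
    fix \<omega> assume "\<omega> \<in> {\<omega>\<in>space M. ?G (X \<omega> i) \<le> t}"
    then have sp: "\<omega> \<in> space M" and le: "?G (X \<omega> i) \<le> t" by auto
    have "F i (X \<omega> i) = ecdf (F i) (ginv ?G (?G (X \<omega> i)))" by (rule FG[OF F i, symmetric])
    also have "\<dots> \<le> ?c"
      using ccdf_bounds[OF Fi] by (intro ecdf_mono[OF mF(1)] ginv_mono le) auto
    finally show "\<omega> \<in> {\<omega>\<in>space M. F i (X \<omega> i) \<le> ?c}" using sp by simp
  qed
  have "measure M {\<omega>\<in>space M. ereal (X \<omega> i) \<le> ginv ?G t} \<le> measure M {\<omega>\<in>space M. ?G (X \<omega> i) \<le> t}"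
    using AB by (rule finite_measure_mono) measurable
  moreover have "measure M {\<omega>\<in>space M. ?G (X \<omega> i) \<le> t} \<le> measure M {\<omega>\<in>space M. F i (X \<omega> i) \<le> ?c}"
    using BC by (rule finite_measure_mono) measurable
  moreover have "measure M {\<omega>\<in>space M. F i (X \<omega> i) \<le> ?c} \<le> ?c"
    by (rule ccdf_PIT_le[OF M Xi cdf Fi c0])
  ultimately show ?thesis using mA by linarith
qed

lemma delta_inv:
  assumes F: "in_Fd d F" and i: "i < d"
    and del: "\<And>s. \<delta> s = ecdf (F i) (ginv (Gmix d F) s)"
    and t: "0 < t" "t < 1"
  shows "ginv \<delta> t = ereal (ecdf (Gmix d F) (ginv (F i) t))"
proof -
  let ?G = "Gmix d F"
  have d: "0 < d" using i by simp
  have G: "ccdf ?G" by (rule G_ccdf[OF F d])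
  have Fi: "ccdf (F i)" by (rule Fd_ccdf[OF F i])
  have mG: "mono ?G" "continuous_on UNIV ?G" using G by (auto simp: ccdf_def)
  have mF: "mono (F i)" "continuous_on UNIV (F i)" using Fi by (auto simp: ccdf_def)
  obtain q where q: "ginv (F i) t = ereal q" "F i q = t" using ccdf_ginv_mid[OF Fi t] by blast
  have dmono: "\<delta> s \<le> \<delta> s'" if "s \<le> s'" for s s'
    unfolding del using ccdf_bounds[OF Fi] by (intro ecdf_mono[OF mF(1)] ginv_mono that) auto
  have dGq: "\<delta> (?G q) = t" unfolding del using FG[OF F i, of q] q by simp
  have iff: "t \<le> \<delta> s \<longleftrightarrow> ?G q \<le> s" for s
  proof
    assume "?G q \<le> s" then show "t \<le> \<delta> s" using dmono dGq by metis
  next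
    assume ts: "t \<le> \<delta> s"
    show "?G q \<le> s"
    proof (rule ccontr)
      assume "\<not> ?G q \<le> s" then have lt: "s < ?G q" by simp
      show False
      proof (cases "ginv ?G s")
        case MInf
        then have "\<delta> s = 0" unfolding del by (simp add: ecdf_def)
        with ts t show False by simp
      next
        case PInf
        then have "\<not> ginv ?G s \<le> ereal q" by simp
        then have "\<not> s \<le> ?G q" using ginv_le_iff[OF mG] by blast
        with lt show False by simp
      next
        case (real r)
        have "\<not> ereal q \<le> ginv ?G s"
        proof
          assume "ereal q \<le> ginv ?G s"
          then have "?G q \<le> s" by (rule le_ginv_imp[OF mG])
          with lt show False by simp
        qed
        with real have rq: "r < q" by simp
        have "\<delta> s = F i r" unfolding del using real by (simp add: ecdf_def)
        moreover have "F i r < t"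
        proof -
          have "\<not> ginv (F i) t \<le> ereal r" using q rq by simp
          then show ?thesis using ginv_le_iff[OF mF] by (simp add: not_le)
        qed
        ultimately show False using ts by simp
      qed
    qed
  qed
  have "ginv \<delta> t = ereal (?G q)"
  proof -
    have "{ereal s |s. t \<le> \<delta> s} = {ereal s |s. ?G q \<le> s}" using iff by auto
    then have "ginv \<delta> t = Inf {ereal s |s. ?G q \<le> s}" by (simp add: ginv_def)
    also have "\<dots> = ereal (?G q)"
    proof (rule antisym)
      show "Inf {ereal s |s. ?G q \<le> s} \<le> ereal (?G q)" by (rule Inf_lower) auto
      show "ereal (?G q) \<le> Inf {ereal s |s. ?G q \<le> s}" by (rule Inf_greatest) auto
    qed
    finally show ?thesis .
  qed
  then show ?thesis using q by (simp add: ecdf_def)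
qed



lemma coord_AE:
  assumes F: "in_Fd d F" and M: "prob_space M" and Xi: "(\<lambda>\<omega>. X \<omega> i) \<in> borel_measurable M"
    and mg: "marg M X i = F i" and i: "i < d"
    and dcdf: "\<And>s. measure M {\<omega>\<in>space M. Gmix d F (X \<omega> i) \<le> s} = \<delta> s"
    and del: "\<And>s. \<delta> s = ecdf (F i) (ginv (Gmix d F) s)"
  shows "AE \<omega> in M. ereal (X \<omega> i) \<le> ginv (F i) y \<longleftrightarrow> ereal (Gmix d F (X \<omega> i)) \<le> ginv \<delta> y"
proof -
  interpret prob_space M by (rule M)
  let ?G = "Gmix d F"
  have d: "0 < d" using i by simp
  have G: "ccdf ?G" by (rule G_ccdf[OF F d])
  have Fi: "ccdf (F i)" by (rule Fd_ccdf[OF F i])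
  have mG: "mono ?G" "continuous_on UNIV ?G" using G by (auto simp: ccdf_def)
  have mF: "mono (F i)" "continuous_on UNIV (F i)" using Fi by (auto simp: ccdf_def)
  have [measurable]: "?G \<in> borel_measurable borel" using mG(2) by (rule borel_measurable_continuous_onI)
  have [measurable]: "F i \<in> borel_measurable borel" using mF(2) by (rule borel_measurable_continuous_onI)
  have [measurable]: "(\<lambda>\<omega>. X \<omega> i) \<in> borel_measurable M" by (rule Xi)
  have cdf: "measure M {\<omega>\<in>space M. X \<omega> i \<le> s} = F i s" for s
    using mg by (simp add: marg_def fun_eq_iff)
  have db: "0 \<le> \<delta> s" "\<delta> s \<le> 1" for s unfolding del using ecdf_bounds[OF Fi] by auto
  consider "y \<le> 0" | "0 < y" "y < 1" | "y = 1" | "1 < y" by linarith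
  then show ?thesis
  proof cases
    case 1
    have "ginv (F i) y = -\<infinity>" by (rule ccdf_ginv_le0[OF Fi 1])
    moreover have "ginv \<delta> y = -\<infinity>" using db 1 by (intro ginv_neg) (auto intro: order_trans)
    ultimately show ?thesis by simp
  next
    case 4
    have "ginv (F i) y = \<infinity>" by (rule ccdf_ginv_gt1[OF Fi 4])
    moreover have "ginv \<delta> y = \<infinity>" using db 4 by (intro ginv_big) (auto intro: le_less_trans)
    ultimately show ?thesis by simp
  next
    case 2
    obtain q where q: "ginv (F i) y = ereal q" "F i q = y" using ccdf_ginv_mid[OF Fi 2] by blast
    have "ginv \<delta> y = ereal (ecdf ?G (ginv (F i) y))" by (rule delta_inv[OF F i del 2])
    then have dq: "ginv \<delta> y = ereal (?G q)" using q by (simp add: ecdf_def)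
    have "AE \<omega> in M. X \<omega> i \<le> q \<longleftrightarrow> ?G (X \<omega> i) \<le> ?G q"
    proof (rule sandwich_AE[OF M, where R="\<lambda>\<omega>. F i (X \<omega> i) \<le> y"])
      show "{\<omega>\<in>space M. X \<omega> i \<le> q} \<in> sets M" by measurable
      show "{\<omega>\<in>space M. ?G (X \<omega> i) \<le> ?G q} \<in> sets M" by measurable
      show "{\<omega>\<in>space M. F i (X \<omega> i) \<le> y} \<in> sets M" by measurable
      fix \<omega> show "X \<omega> i \<le> q \<Longrightarrow> ?G (X \<omega> i) \<le> ?G q" using mG(1) by (auto dest: monoD)
      assume "?G (X \<omega> i) \<le> ?G q"
      have "F i (X \<omega> i) = ecdf (F i) (ginv ?G (?G (X \<omega> i)))" by (rule FG[OF F i, symmetric])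
      also have "\<dots> \<le> ecdf (F i) (ginv ?G (?G q))"
        using ccdf_bounds[OF Fi] by (intro ecdf_mono[OF mF(1)] ginv_mono \<open>?G (X \<omega> i) \<le> ?G q\<close>) auto
      also have "\<dots> = y" using FG[OF F i, of q] q by simp
      finally show "F i (X \<omega> i) \<le> y" .
    next
      have "measure M {\<omega>\<in>space M. F i (X \<omega> i) \<le> y} \<le> y"
        using 2 by (intro ccdf_PIT_le[OF M Xi cdf Fi]) simp
      then show "measure M {\<omega>\<in>space M. F i (X \<omega> i) \<le> y} \<le> measure M {\<omega>\<in>space M. X \<omega> i \<le> q}"
        using cdf[of q] q by simp
    qed
    then show ?thesis using q dq by simp
  next
    case 3
    have a1: "AE \<omega> in M. ereal (?G (X \<omega> i)) \<le> ginv \<delta> 1"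
      by (rule AE_le_ginv_1[OF M _ dcdf]) measurable
    have "measure M {\<omega>\<in>space M. ereal (X \<omega> i) \<le> ginv (F i) 1} = 1"
      using ccdf_Q[OF M Xi cdf Fi, of 1] by simp
    moreover have s: "{\<omega>\<in>space M. ereal (X \<omega> i) \<le> ginv (F i) 1} \<in> sets M" by measurable
    ultimately have a2: "AE \<omega> in M. ereal (X \<omega> i) \<le> ginv (F i) 1"
      using prob_Collect_eq_1[OF s] by simp
    from a1 a2 have "AE \<omega> in M. ereal (X \<omega> i) \<le> ginv (F i) 1 \<longleftrightarrow> ereal (?G (X \<omega> i)) \<le> ginv \<delta> 1"
      by eventually_elim simp
    then show ?thesis using 3 by simp
  qed
qed



theorem mainTheorem9:
  fixes d :: nat and F :: "nat \<Rightarrow> real \<Rightarrow> real"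
    and C S :: "(nat \<Rightarrow> real) \<Rightarrow> real"
    and M :: "'a measure" and X :: "'a \<Rightarrow> nat \<Rightarrow> real" and Perm :: "'a \<Rightarrow> nat \<Rightarrow> nat"
  assumes F: "in_Fd d F"
    and C: "in_COS d F C"
    and M: "prob_space M"
    and X: "rand_vec M d X"
    and Xmarg: "\<forall>i<d. marg M X i = F i"
    and Xcop: "copula_of M d X C"
    and Perm_perm: "\<forall>\<omega>\<in>space M. Perm \<omega> permutes {..<d}"
    and Perm_meas: "Perm \<in> measurable M (count_space UNIV)"
    and Perm_unif: "\<forall>p. p permutes {..<d} \<longrightarrow>
                    measure M {\<omega> \<in> space M. Perm \<omega> = p} = 1 / fact d"
    and indep: "\<forall>A \<in> sets (PiM {..<d} (\<lambda>_. borel)). \<forall>p.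
                  measure M {\<omega> \<in> space M. restrict (X \<omega>) {..<d} \<in> A \<and> Perm \<omega> = p}
                  = measure M {\<omega> \<in> space M. restrict (X \<omega>) {..<d} \<in> A}
                    * measure M {\<omega> \<in> space M. Perm \<omega> = p}"
    and S: "copula_of M d (\<lambda>\<omega> i. X \<omega> (Perm \<omega> i)) S"
  shows "\<forall>(N :: 'b measure) U. prob_space N \<and> rand_vec N d U \<and> has_cdf N d U S \<longrightarrow>
           (\<forall>i<d.
              (\<forall>t. marg N (\<lambda>\<omega>. ordstat d (U \<omega>)) i t = ecdf (F i) (ginv (Gmix d F) t))
            \<and> (\<forall>t\<in>{0<..<1}. ginv (marg N (\<lambda>\<omega>. ordstat d (U \<omega>)) i) t
                               = ereal (ecdf (Gmix d F) (ginv (F i) t))))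
         \<and> copula_of N d (\<lambda>\<omega>. ordstat d (U \<omega>)) C
         \<and> (\<forall>C'. copula_of N d (\<lambda>\<omega>. ordstat d (U \<omega>)) C' \<longrightarrow> C' = C)"
proof (intro allI impI)
  fix N :: "'b measure" and U
  assume asm: "prob_space N \<and> rand_vec N d U \<and> has_cdf N d U S"
  then have N: "prob_space N" and U: "rand_vec N d U" and cdfU: "has_cdf N d U S" by auto
  let ?G = "Gmix d F"
  let ?OS = "\<lambda>\<omega>. ordstat d (U \<omega>)"
  have tr: "measure N {\<omega>\<in>space N. \<forall>i<d. ordstat d (U \<omega>) i \<in> D i}
       = measure M {\<omega>\<in>space M. \<forall>i<d. Gmix d F (X \<omega> i) \<in> D i}"
    if "\<And>i. i < d \<Longrightarrow> D i \<in> sets borel" "\<And>i x y. i < d \<Longrightarrow> y \<in> D i \<Longrightarrow> x \<le> y \<Longrightarrow> x \<in> D i" for D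
    by (rule transport[OF F C M X Xmarg Xcop Perm_perm Perm_meas Perm_unif indep S N U cdfU that])
  have Xm: "\<And>i. i < d \<Longrightarrow> (\<lambda>\<omega>. X \<omega> i) \<in> borel_measurable M" using X by (simp add: rand_vec_def)
  have margOS: "marg N ?OS i t = measure M {\<omega>\<in>space M. ?G (X \<omega> i) \<le> t}" if i: "i < d" for i t
  proof -
    define D where "D i' = (if i' = i then {..t} else UNIV)" for i'
    have "marg N ?OS i t = measure N {\<omega>\<in>space N. \<forall>i'<d. ordstat d (U \<omega>) i' \<in> D i'}"
      unfolding marg_def D_def using i by (intro arg_cong[where f="measure N"]) auto
    also have "\<dots> = measure M {\<omega>\<in>space M. \<forall>i'<d. ?G (X \<omega> i') \<in> D i'}"
      by (rule tr) (auto simp: D_def split: if_splits)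
    also have "\<dots> = measure M {\<omega>\<in>space M. ?G (X \<omega> i) \<le> t}"
      unfolding D_def using i by (intro arg_cong[where f="measure M"]) auto
    finally show ?thesis .
  qed
  have GX: "measure M {\<omega>\<in>space M. ?G (X \<omega> i) \<le> t} = ecdf (F i) (ginv ?G t)" if i: "i < d" for i t
    using Xmarg i by (intro GX_cdf[where X=X and i=i, OF F M Xm[OF i]]) auto
  have part1: "marg N ?OS i t = ecdf (F i) (ginv ?G t)" if i: "i < d" for i t
    using margOS[OF i] GX[OF i] by simp
  have part2: "ginv (marg N ?OS i) t = ereal (ecdf ?G (ginv (F i) t))" if i: "i < d" and t: "t \<in> {0<..<1}" for i t
    using t part1[OF i] by (intro delta_inv[OF F i]) auto
  have cop: "copula_of N d ?OS C"
    unfolding copula_of_def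
  proof
    show "is_copula d C" using Xcop by (simp add: copula_of_def)
    show "\<forall>y. C y = vcdf N d ?OS (\<lambda>i. ginv (marg N ?OS i) (y i))"
    proof
      fix y
      have "C y = vcdf M d X (\<lambda>i. ginv (marg M X i) (y i))" using Xcop by (simp add: copula_of_def)
      also have "\<dots> = measure M {\<omega>\<in>space M. \<forall>i<d. ereal (X \<omega> i) \<le> ginv (F i) (y i)}"
        unfolding vcdf_def using Xmarg by (intro arg_cong[where f="measure M"]) auto
      also have "\<dots> = measure M {\<omega>\<in>space M. \<forall>i<d. ereal (?G (X \<omega> i)) \<le> ginv (marg N ?OS i) (y i)}"
      proof (rule AE_joint[OF M])
        fix i assume i: "i < d"
        have d: "0 < d" using i by simp
        have [measurable]: "?G \<in> borel_measurable borel"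
          using G_ccdf[OF F d] by (intro borel_measurable_continuous_onI) (simp add: ccdf_def)
        have [measurable]: "(\<lambda>\<omega>. X \<omega> i) \<in> borel_measurable M" by (rule Xm[OF i])
        show "{\<omega>\<in>space M. ereal (X \<omega> i) \<le> ginv (F i) (y i)} \<in> sets M" by measurable
        show "{\<omega>\<in>space M. ereal (?G (X \<omega> i)) \<le> ginv (marg N ?OS i) (y i)} \<in> sets M" by measurable
        show "AE \<omega> in M. ereal (X \<omega> i) \<le> ginv (F i) (y i) \<longleftrightarrow> ereal (?G (X \<omega> i)) \<le> ginv (marg N ?OS i) (y i)"
        proof (rule coord_AE[where X=X and i=i, OF F M Xm[OF i] _ i])
          show "marg M X i = F i" using Xmarg i by simp
          show "\<And>s. measure M {\<omega>\<in>space M. ?G (X \<omega> i) \<le> s} = marg N ?OS i s" using margOS[OF i] by simp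
          show "\<And>s. marg N ?OS i s = ecdf (F i) (ginv ?G s)" by (rule part1[OF i])
        qed
      qed
      also have "\<dots> = measure M {\<omega>\<in>space M. \<forall>i<d. ?G (X \<omega> i) \<in> {z. ereal z \<le> ginv (marg N ?OS i) (y i)}}"
        by simp
      also have "\<dots> = measure N {\<omega>\<in>space N. \<forall>i<d. ordstat d (U \<omega>) i \<in> {z. ereal z \<le> ginv (marg N ?OS i) (y i)}}"
      proof (rule tr[symmetric])
        fix i assume "i < d"
        show "{z. ereal z \<le> ginv (marg N ?OS i) (y i)} \<in> sets borel" by measurable
      next
        fix i x z assume "z \<in> {z. ereal z \<le> ginv (marg N ?OS i) (y i)}" "x \<le> z"
        then have "ereal x \<le> ereal z" "ereal z \<le> ginv (marg N ?OS i) (y i)" by auto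
        then show "x \<in> {z. ereal z \<le> ginv (marg N ?OS i) (y i)}" by (metis mem_Collect_eq order_trans)
      qed
      also have "\<dots> = vcdf N d ?OS (\<lambda>i. ginv (marg N ?OS i) (y i))"
        unfolding vcdf_def by simp
      finally show "C y = vcdf N d ?OS (\<lambda>i. ginv (marg N ?OS i) (y i))" .
    qed
  qed
  have uniq: "\<forall>C'. copula_of N d ?OS C' \<longrightarrow> C' = C"
  proof (intro allI impI)
    fix C' assume "copula_of N d ?OS C'"
    then have "\<forall>y. C' y = vcdf N d ?OS (\<lambda>i. ginv (marg N ?OS i) (y i))" by (simp add: copula_of_def)
    moreover have "\<forall>y. C y = vcdf N d ?OS (\<lambda>i. ginv (marg N ?OS i) (y i))" using cop by (simp add: copula_of_def)
    ultimately show "C' = C" by (simp add: fun_eq_iff)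
  qed
  show "(\<forall>i<d.
              (\<forall>t. marg N ?OS i t = ecdf (F i) (ginv (Gmix d F) t))
            \<and> (\<forall>t\<in>{0<..<1}. ginv (marg N ?OS i) t
                               = ereal (ecdf (Gmix d F) (ginv (F i) t))))
         \<and> copula_of N d ?OS C
         \<and> (\<forall>C'. copula_of N d ?OS C' \<longrightarrow> C' = C)"
    using part1 part2 cop uniq by blast
qed

end
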